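(* There exists a constant $K>0$ such that every solution $\mathbf{u}$ of the Cauchy problem (KPP)--(IC) satisfies \[ u_i(t,x)\leq K+\sup_{y\in\mathbb{R}^n}\max_{j\in[N]}u_{\mathrm{ini},j}(y)\quad\text{for all }i\in[N],\ (t,x)\in[0,+\infty)\times\mathbb{R}^n, \] and \[ \limsup_{t\to+\infty}\sup_{x\in\mathbb{R}^n}\max_{i\in[N]}u_i(t,x)\leq K. \]
   Context: Setting. Let $N,n\geq 1$ be integers, $[N]=\{1,\dots,N\}$, and fix $T,L_1,\dots,L_n>0$. "Periodic" means $T$-periodic in $t$ and $L_\alpha$-periodic in $x_\alpha$ for each $\alpha\in[n]$. For each $i\in[N]$ let $A_i:\mathbb{R}\times\mathbb{R}^n\to\mathbb{R}^{n\times n}$ (symmetric) and $q_i:\mathbb{R}\times\mathbb{R}^n\to\mathbb{R}^n$, and let $\mathbf{L}=(l_{i,j}),\mathbf{C}=(c_{i,j}):\mathbb{R}\times\mathbb{R}^n\to\mathbb{R}^{N\times N}$, all periodic, with some $\delta\in(0,1)$ such that $\mathbf{L},\mathbf{C},q_i$ are $\delta/2$-Hölder in $t$ and $\delta$-Hölder in $x$, and $A_i$ is $\delta/2$-Hölder in $t$ and $C^{1+\delta}$ in $x$. Standing assumptions: (i) $\min_{i}\inf_{|y|=1}\inf_{(t,x)}y\cdot A_i(t,x)y>0$; (ii) for $i\neq j$, $\min_{(t,x)}l_{i,j}\geq 0$; (iii) the matrix $(\max_{(t,x)}l_{i,j}(t,x))_{i,j}$ is irreducible (leaves invariant no coordinate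 subspace $\mathrm{span}(\mathbf{e}_{i_1},\dots,\mathbf{e}_{i_k})$, $1\leq k\leq N-1$; $1\times1$ matrices are irreducible); (iv) $\min_{(t,x)}c_{i,j}>0$ for all $i,j$. $\mathcal{P}_iu=\partial_tu-\nabla\cdot(A_i\nabla u)+q_i\cdot\nabla u$. The system (KPP) is $\mathcal{P}_iu_i=\sum_jl_{i,j}u_j-u_i\sum_jc_{i,j}u_j$, $i\in[N]$; the Cauchy problem (KPP)--(IC) is (KPP) on $(0,+\infty)\times\mathbb{R}^n$ with $\mathbf{u}(0,\cdot)=\mathbf{u}_{\mathrm{ini}}$, $\mathbf{u}_{\mathrm{ini}}$ bounded, continuous, componentwise nonnegative. The constant $K$ may depend on the coefficients but not on $\mathbf{u}_{\mathrm{ini}}$. *)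

theory Defs
  imports "HOL-Analysis.Analysis"
begin

text \<open>Space variable x in R^n is real^'n; the N components are indexed by a finite type 'k.
  Coefficients: A i t x (n x n matrix), q i t x (vector in R^n),
  Lc t x = (l_{i,j}), Cc t x = (c_{i,j}) (N x N matrices).\<close>

definition periodic_tx :: "real \<Rightarrow> real^'n \<Rightarrow> (real \<Rightarrow> real^'n \<Rightarrow> 'b) \<Rightarrow> bool" where
  "periodic_tx T L f \<longleftrightarrow>
     (\<forall>t x. f (t + T) x = f t x) \<and>
     (\<forall>t x \<alpha>. f t (x + (L $ \<alpha>) *\<^sub>R axis \<alpha> 1) = f t x)"

text \<open>Parabolic Hoelder regularity: delta/2-Hoelder in t and delta-Hoelder in x (uniformly).\<close>
definition holder_tx :: "real \<Rightarrow> (real \<Rightarrow> real^'n \<Rightarrow> 'b::real_normed_vector) \<Rightarrow> bool" where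
  "holder_tx \<delta> f \<longleftrightarrow> (\<exists>C. \<forall>t s x y.
     norm (f t x - f s y) \<le> C * (\<bar>t - s\<bar> powr (\<delta> / 2) + norm (x - y) powr \<delta>))"

text \<open>A is delta/2-Hoelder in t and C^{1+delta} in x: A is differentiable in x, and A together
  with its partial derivatives dA t x alpha = d/dx_alpha A(t,x) are Hoelder as above.\<close>
definition holder_tx_C1 :: "real \<Rightarrow> (real \<Rightarrow> real^'n \<Rightarrow> 'b::real_normed_vector) \<Rightarrow> bool" where
  "holder_tx_C1 \<delta> f \<longleftrightarrow> holder_tx \<delta> f \<and>
     (\<exists>df :: real \<Rightarrow> real^'n \<Rightarrow> 'n \<Rightarrow> 'b.
        (\<forall>t x. (f t has_derivative (\<lambda>h. \<Sum>\<alpha>\<in>UNIV. (h $ \<alpha>) *\<^sub>R df t x \<alpha>)) (at x)) \<and>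
        (\<forall>\<alpha>. holder_tx \<delta> (\<lambda>t x. df t x \<alpha>)))"

text \<open>Irreducibility: M leaves invariant no coordinate subspace span(e_i, i in I), I nonempty proper.\<close>
definition irreducible_mat :: "real^'k^'k \<Rightarrow> bool" where
  "irreducible_mat M \<longleftrightarrow>
     (\<forall>I. I \<noteq> {} \<and> I \<noteq> UNIV \<longrightarrow>
        \<not> ((*v) M ` span ((\<lambda>i. axis i 1) ` I) \<subseteq> span ((\<lambda>i. axis i 1) ` I)))"

text \<open>Standing assumptions on the coefficients.\<close>
definition standing_assumptions ::
  "real \<Rightarrow> real^'n \<Rightarrow> ('k \<Rightarrow> real \<Rightarrow> real^'n \<Rightarrow> real^'n^'n) \<Rightarrow> ('k \<Rightarrow> real \<Rightarrow> real^'n \<Rightarrow> real^'n)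
   \<Rightarrow> (real \<Rightarrow> real^'n \<Rightarrow> real^'k^'k) \<Rightarrow> (real \<Rightarrow> real^'n \<Rightarrow> real^'k^'k) \<Rightarrow> bool" where
  "standing_assumptions T L A q Lc Cc \<longleftrightarrow>
     T > 0 \<and> (\<forall>\<alpha>. L $ \<alpha> > 0) \<and>
     (\<forall>i. periodic_tx T L (A i) \<and> periodic_tx T L (q i)) \<and>
     periodic_tx T L Lc \<and> periodic_tx T L Cc \<and>
     (\<exists>\<delta>. 0 < \<delta> \<and> \<delta> < 1 \<and> holder_tx \<delta> Lc \<and> holder_tx \<delta> Cc \<and>
        (\<forall>i. holder_tx \<delta> (q i) \<and> holder_tx_C1 \<delta> (A i))) \<and>
     (\<forall>i t x. transpose (A i t x) = A i t x) \<and>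
     (\<exists>\<mu>>0. \<forall>i t x y. norm y = 1 \<longrightarrow> y \<bullet> (A i t x *v y) \<ge> \<mu>) \<and>
     (\<forall>i j t x. i \<noteq> j \<longrightarrow> Lc t x $ i $ j \<ge> 0) \<and>
     irreducible_mat (\<chi> i j. (SUP tx. Lc (fst tx) (snd tx) $ i $ j)) \<and>
     (\<forall>i j. (INF tx. Cc (fst tx) (snd tx) $ i $ j) > 0)"

text \<open>Classical solution of the Cauchy problem (KPP)--(IC): continuous on [0,oo) x R^n,
  C^{1,2} on (0,oo) x R^n, bounded on every strip [0,T'] x R^n, with initial value u0,
  satisfying P_i u_i = sum_j l_ij u_j - u_i sum_j c_ij u_j pointwise.
  Divergence term: div(A_i grad u_i) is the trace of the x-derivative of the flux A_i grad u_i.\<close>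
definition kpp_solution ::
  "('k \<Rightarrow> real \<Rightarrow> real^'n \<Rightarrow> real^'n^'n) \<Rightarrow> ('k \<Rightarrow> real \<Rightarrow> real^'n \<Rightarrow> real^'n)
   \<Rightarrow> (real \<Rightarrow> real^'n \<Rightarrow> real^'k^'k) \<Rightarrow> (real \<Rightarrow> real^'n \<Rightarrow> real^'k^'k)
   \<Rightarrow> (real^'n \<Rightarrow> real^'k) \<Rightarrow> (real \<Rightarrow> real^'n \<Rightarrow> real^'k) \<Rightarrow> bool" where
  "kpp_solution A q Lc Cc u0 u \<longleftrightarrow>
     continuous_on ({0..} \<times> UNIV) (\<lambda>(t, x). u t x) \<and>
     (\<forall>x. u 0 x = u0 x) \<and>
     (\<forall>T'>0. bounded ((\<lambda>(t, x). u t x) ` ({0..T'} \<times> UNIV))) \<and>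
     (\<forall>i. \<exists>(ut :: real \<Rightarrow> real^'n \<Rightarrow> real) (Du :: real \<Rightarrow> real^'n \<Rightarrow> real^'n)
            (D2u :: real \<Rightarrow> real^'n \<Rightarrow> real^'n^'n) (DF :: real \<Rightarrow> real^'n \<Rightarrow> real^'n \<Rightarrow> real^'n).
        (\<forall>t>0. \<forall>x. ((\<lambda>s. u s x $ i) has_real_derivative ut t x) (at t)) \<and>
        (\<forall>t>0. \<forall>x. ((\<lambda>y. u t y $ i) has_derivative (\<lambda>h. Du t x \<bullet> h)) (at x)) \<and>
        (\<forall>t>0. \<forall>x. (Du t has_derivative (\<lambda>h. D2u t x *v h)) (at x)) \<and>
        continuous_on ({0<..} \<times> UNIV) (\<lambda>(t, x). ut t x) \<and>
        continuous_on ({0<..} \<times> UNIV) (\<lambda>(t, x). Du t x) \<and>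
        continuous_on ({0<..} \<times> UNIV) (\<lambda>(t, x). D2u t x) \<and>
        (\<forall>t>0. \<forall>x. ((\<lambda>y. A i t y *v Du t y) has_derivative DF t x) (at x)) \<and>
        (\<forall>t>0. \<forall>x.
           ut t x - (\<Sum>\<alpha>\<in>UNIV. DF t x (axis \<alpha> 1) $ \<alpha>) + q i t x \<bullet> Du t x
           = (\<Sum>j\<in>UNIV. Lc t x $ i $ j * u t x $ j) - u t x $ i * (\<Sum>j\<in>UNIV. Cc t x $ i $ j * u t x $ j)))"

end

theory Submission
  imports Defs
begin


lemma quad_sum: "(h::real^'n) \<bullet> (A *v h) = (\<Sum>i\<in>UNIV. \<Sum>j\<in>UNIV. h$i * A$i$j * h$j)"
  by (simp add: inner_vec_def matrix_vector_mult_def sum_distrib_left mult.assoc)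

lemma bil_sum: "(x::real^'n) \<bullet> (A *v y) = (\<Sum>i\<in>UNIV. \<Sum>j\<in>UNIV. x$i * A$i$j * y$j)"
  by (simp add: inner_vec_def matrix_vector_mult_def sum_distrib_left mult.assoc)

lemma tr_sum: "(\<Sum>\<alpha>\<in>UNIV. ((A::real^'n^'n) *v (B *v axis \<alpha> 1)) $ \<alpha>) = (\<Sum>\<alpha>\<in>UNIV. \<Sum>\<beta>\<in>UNIV. A$\<alpha>$\<beta> * B$\<beta>$\<alpha>)"
  by (simp add: matrix_vector_mult_def axis_def if_distrib sum.If_cases cong: if_cong)

lemma sym_bil:
  assumes "transpose A = A"
  shows "(x::real^'n) \<bullet> (A *v y) = y \<bullet> (A *v x)"
proof -
  have s: "\<And>i j. A$i$j = A$j$i" using assms by (metis transpose_def vec_lambda_beta)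
  show ?thesis unfolding bil_sum
    apply (subst sum.swap)
    apply (intro sum.cong refl)
    using s by (simp add: mult.commute mult.left_commute)
qed

lemma psd_cs:
  assumes sym: "transpose A = A" and psd: "\<forall>h. 0 \<le> h \<bullet> (A *v h)"
  shows "((x::real^'n) \<bullet> (A *v y))^2 \<le> (x \<bullet> (A *v x)) * (y \<bullet> (A *v y))"
proof -
  let ?a = "x \<bullet> (A *v x)" and ?b = "x \<bullet> (A *v y)" and ?c = "y \<bullet> (A *v y)"
  have q: "0 \<le> ?a + 2*t*?b + t^2 * ?c" for t
  proof -
    have "0 \<le> (x + t *\<^sub>R y) \<bullet> (A *v (x + t *\<^sub>R y))" using psd by blast
    also have "\<dots> = ?a + t * (x \<bullet> (A *v y)) + t * (y \<bullet> (A *v x)) + t^2 * ?c"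
      by (simp add: matrix_vector_right_distrib matrix_vector_mult_scaleR inner_add_left inner_add_right power2_eq_square algebra_simps)
    also have "\<dots> = ?a + 2*t*?b + t^2 * ?c" using sym_bil[OF sym, of y x] by simp
    finally show ?thesis .
  qed
  have a0: "0 \<le> ?a" and c0: "0 \<le> ?c" using psd by auto
  show ?thesis
  proof (cases "?c = 0")
    case True
    have "?b = 0"
    proof (rule ccontr)
      assume nz: "?b \<noteq> 0"
      have "0 \<le> ?a + 2*(-(?a+1)/(2*?b))*?b" using q[of "-(?a+1)/(2*?b)"] True by simp
      also have "\<dots> = -1" using nz by (simp add: field_simps)
      finally show False by simp
    qed
    then show ?thesis using True by simp
  next
    case False
    then have cp: "?c > 0" using c0 by simp
    have "0 \<le> ?a + 2*(-?b/?c)*?b + (-?b/?c)^2 * ?c" using q by blast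
    also have "\<dots> = ?a - ?b^2/?c" using cp by (simp add: field_simps power2_eq_square)
    finally have "?b^2/?c \<le> ?a" by simp
    then show ?thesis using cp by (simp add: divide_le_eq mult.commute)
  qed
qed


definition trm :: "real^'n^'n \<Rightarrow> real^'n^'n \<Rightarrow> real" where
  "trm A B = (\<Sum>\<alpha>\<in>UNIV. \<Sum>\<beta>\<in>UNIV. A$\<alpha>$\<beta> * B$\<beta>$\<alpha>)"

lemma trace_le0_aux:
  fixes B :: "real^'n^'n"
  assumes nsd: "\<forall>h. h \<bullet> (B *v h) \<le> 0"
  shows "finite S \<Longrightarrow> \<forall>A. transpose A = A \<and> (\<forall>h. 0 \<le> h \<bullet> (A *v h)) \<and> (\<forall>p q. p \<notin> S \<longrightarrow> A$p$q = 0)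
     \<longrightarrow> trm A B \<le> 0"
proof (induction S rule: finite_induct)
  case empty
  then show ?case by (simp add: trm_def)
next
  case (insert p S)
  show ?case
  proof (intro allI impI, elim conjE)
    fix A :: "real^'n^'n"
    assume sym: "transpose A = A" and psd: "\<forall>h. 0 \<le> h \<bullet> (A *v h)"
      and supp: "\<forall>r q. r \<notin> insert p S \<longrightarrow> A$r$q = 0"
    have s: "\<And>i j. A$i$j = A$j$i" using sym by (metis transpose_def vec_lambda_beta)
    have ax: "axis i 1 \<bullet> (A *v axis j 1) = A$i$j" for i j
      by (simp add: inner_axis' matrix_vector_mult_basis column_def)
    let ?d = "A$p$p"
    have d0: "0 \<le> ?d" using psd ax[of p p] by metis
    show "trm A B \<le> 0"
    proof (cases "?d = 0")
      case True
      have "A$p$q = 0" for q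
        using psd_cs[OF sym psd, of "axis p 1" "axis q 1"] True psd ax[of q q] unfolding ax by simp
      then have "\<forall>r q. r \<notin> S \<longrightarrow> A$r$q = 0" using supp by (metis insertE)
      then show ?thesis using insert.IH sym psd by blast
    next
      case False
      then have dp: "?d > 0" using d0 by simp
      define a where "a = (\<chi> q. A$p$q)"
      define A' where "A' = (\<chi> i j. A$i$j - a$i * a$j / ?d)"
      have A'c: "A'$i$j = A$i$j - a$i * a$j / ?d" for i j by (simp add: A'_def)
      have symA': "transpose A' = A'"
        by (simp add: transpose_def A'_def s mult.commute)
      have ah: "a \<bullet> h = axis p 1 \<bullet> (A *v h)" for h
        unfolding inner_axis' by (simp add: a_def matrix_vector_mult_def inner_vec_def mult.commute)
      have quadA': "h \<bullet> (A' *v h) = h \<bullet> (A *v h) - (a \<bullet> h)^2 / ?d" for h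
      proof -
        have "h \<bullet> (A' *v h) = (\<Sum>i\<in>UNIV. \<Sum>j\<in>UNIV. h$i * A$i$j * h$j - (h$i * a$i) * (a$j * h$j) / ?d)"
          unfolding quad_sum A'c by (intro sum.cong refl) (simp add: algebra_simps)
        also have "\<dots> = h \<bullet> (A *v h) - (\<Sum>i\<in>UNIV. \<Sum>j\<in>UNIV. (h$i * a$i) * (a$j * h$j)) / ?d"
          unfolding quad_sum by (simp add: sum_subtractf sum_divide_distrib)
        also have "(\<Sum>i\<in>UNIV. \<Sum>j\<in>UNIV. (h$i * a$i) * (a$j * h$j)) = (a \<bullet> h)^2"
          by (simp add: power2_eq_square inner_vec_def sum_product mult.commute)
        finally show ?thesis .
      qed
      have psdA': "\<forall>h. 0 \<le> h \<bullet> (A' *v h)"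
      proof
        fix h
        have "(a \<bullet> h)^2 \<le> ?d * (h \<bullet> (A *v h))"
          using psd_cs[OF sym psd, of "axis p 1" h] unfolding ah ax by simp
        then show "0 \<le> h \<bullet> (A' *v h)" unfolding quadA' using dp
          by (simp add: field_simps)
      qed
      have suppA': "\<forall>r q. r \<notin> S \<longrightarrow> A'$r$q = 0"
      proof (intro allI impI)
        fix r q assume r: "r \<notin> S"
        show "A'$r$q = 0"
        proof (cases "r = p")
          case True then show ?thesis using dp by (simp add: A'c a_def)
        next
          case False
          then have "A$r$q = 0" "a$r = 0" using supp r s by (auto simp: a_def)
          then show ?thesis by (simp add: A'c)
        qed
      qed
      have "trm A' B \<le> 0" using insert.IH symA' psdA' suppA' by blast
      moreover have "trm A B = trm A' B + (a \<bullet> (B *v a)) / ?d"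
      proof -
        have "trm A B = (\<Sum>\<alpha>\<in>UNIV. \<Sum>\<beta>\<in>UNIV. A'$\<alpha>$\<beta> * B$\<beta>$\<alpha> + (a$\<beta> * B$\<beta>$\<alpha> * a$\<alpha>) / ?d)"
          unfolding trm_def A'c using dp by (intro sum.cong refl) (simp add: field_simps)
        also have "\<dots> = trm A' B + (\<Sum>\<alpha>\<in>UNIV. \<Sum>\<beta>\<in>UNIV. a$\<beta> * B$\<beta>$\<alpha> * a$\<alpha>) / ?d"
          unfolding trm_def by (simp add: sum.distrib sum_divide_distrib)
        also have "(\<Sum>\<alpha>\<in>UNIV. \<Sum>\<beta>\<in>UNIV. a$\<beta> * B$\<beta>$\<alpha> * a$\<alpha>) = a \<bullet> (B *v a)"
          unfolding bil_sum by (rule sum.swap)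
        finally show ?thesis .
      qed
      moreover have "a \<bullet> (B *v a) \<le> 0" using nsd by blast
      ultimately show ?thesis using dp divide_nonpos_pos[of "a \<bullet> (B *v a)" ?d] by linarith
    qed
  qed
qed

lemma trace_le0:
  fixes A B :: "real^'n^'n"
  assumes "transpose A = A" "\<forall>h. 0 \<le> h \<bullet> (A *v h)" "\<forall>h. h \<bullet> (B *v h) \<le> 0"
  shows "(\<Sum>\<alpha>\<in>UNIV. (A *v (B *v axis \<alpha> 1)) $ \<alpha>) \<le> 0"
  using trace_le0_aux[OF assms(3), of UNIV] assms(1,2) unfolding tr_sum trm_def by simp



lemma bb_mv: "bounded_bilinear ((*v) :: real^'n^'m \<Rightarrow> real^'n \<Rightarrow> real^'m)"
proof
  fix a a' :: "real^'n^'m" and b b' :: "real^'n" and r :: real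
  show "(a + a') *v b = a *v b + a' *v b" by (simp add: matrix_vector_mult_add_rdistrib)
  show "a *v (b + b') = a *v b + a *v b'" by (simp add: matrix_vector_right_distrib)
  show "(r *\<^sub>R a) *v b = r *\<^sub>R (a *v b)"
    by (simp add: vec_eq_iff matrix_vector_mult_def sum_distrib_left mult.assoc)
  show "a *v (r *\<^sub>R b) = r *\<^sub>R (a *v b)" by (simp add: matrix_vector_mult_scaleR)
next
  show "\<exists>K. \<forall>a b. norm ((a::real^'n^'m) *v b) \<le> norm a * norm b * K"
  proof (intro exI allI)
    fix a :: "real^'n^'m" and b :: "real^'n"
    have "norm (a *v b) \<le> (\<Sum>i\<in>UNIV. \<bar>(a *v b) $ i\<bar>)" by (rule norm_le_l1_cart)
    also have "\<dots> \<le> (\<Sum>i\<in>(UNIV::'m set). norm a * norm b)"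
    proof (rule sum_mono)
      fix i
      have "\<bar>(a *v b) $ i\<bar> \<le> norm (a $ i) * norm b"
        by (simp add: matrix_mult_dot Cauchy_Schwarz_ineq2)
      also have "\<dots> \<le> norm a * norm b" by (rule mult_right_mono[OF Finite_Cartesian_Product.norm_nth_le]) simp
      finally show "\<bar>(a *v b) $ i\<bar> \<le> norm a * norm b" .
    qed
    finally show "norm (a *v b) \<le> norm a * norm b * real CARD('m)" by (simp add: mult.commute)
  qed
qed

lemma mv_comp_le: "\<bar>((a::real^'n^'m) *v b) $ i\<bar> \<le> norm a * norm b"
proof -
  have "\<bar>(a *v b) $ i\<bar> \<le> norm (a $ i) * norm b"
    by (simp add: matrix_mult_dot Cauchy_Schwarz_ineq2)
  also have "\<dots> \<le> norm a * norm b" by (rule mult_right_mono[OF Finite_Cartesian_Product.norm_nth_le]) simp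
  finally show ?thesis .
qed

lemma axis_sum: "(\<Sum>\<beta>\<in>UNIV. (axis \<alpha> (1::real) $ \<beta>) *\<^sub>R f \<beta>) = (f \<alpha> :: 'b::real_vector)"
proof -
  have "\<And>\<beta>. (axis \<alpha> (1::real) $ \<beta>) *\<^sub>R f \<beta> = (if \<beta> = \<alpha> then f \<beta> else 0)"
    by (simp add: axis_def)
  then show ?thesis by simp
qed

lemma time_max:
  fixes f :: "real \<Rightarrow> real"
  assumes "(f has_real_derivative f') (at t0)" "0 < t0" "\<forall>s. 0 < s \<and> s < t0 \<longrightarrow> f s \<le> f t0"
  shows "0 \<le> f'"
proof (rule ccontr)
  assume "\<not> 0 \<le> f'"
  then obtain d where d: "d > 0" "\<forall>h>0. h < d \<longrightarrow> f t0 < f (t0 - h)"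
    using DERIV_neg_dec_left[OF assms(1)] by force
  let ?h = "min (d/2) (t0/2)"
  have "f t0 < f (t0 - ?h)" using d assms(2) by simp
  moreover have "f (t0 - ?h) \<le> f t0" using assms(2,3) d by simp
  ultimately show False by simp
qed

lemma space_max1:
  fixes g :: "real^'n \<Rightarrow> real"
  assumes "(g has_derivative (\<lambda>h. w \<bullet> h)) (at x0)" "\<forall>y. g y \<le> g x0"
  shows "w = 0"
proof -
  have "(\<lambda>h. w \<bullet> h) = (\<lambda>h. 0)"
    using differential_zero_maxmin[of x0 UNIV g, OF _ _ assms(1)] assms(2) by auto
  then have "w \<bullet> w = 0" by metis
  then show ?thesis by simp
qed

lemma space_max2:
  fixes g :: "real^'n \<Rightarrow> real"
  assumes max: "\<forall>y. g y \<le> g x0"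
    and dg: "\<forall>y. (g has_derivative (\<lambda>h. W y \<bullet> h)) (at y)"
    and W0: "W x0 = 0"
    and dW: "(W has_derivative W') (at x0)"
  shows "h \<bullet> W' h \<le> 0"
proof (rule ccontr)
  assume neg: "\<not> h \<bullet> W' h \<le> 0"
  define p where "p s = W (x0 + s *\<^sub>R h) \<bullet> h" for s :: real
  have dline: "((\<lambda>s. g (x0 + s *\<^sub>R h)) has_real_derivative p s) (at s)" for s
  proof -
    have "((\<lambda>s. x0 + s *\<^sub>R h) has_derivative (\<lambda>s'. s' *\<^sub>R h)) (at s)"
      by (auto intro!: derivative_eq_intros)
    from has_derivative_compose[OF this dg[rule_format, of "x0 + s *\<^sub>R h"]]
    have "((\<lambda>s. g (x0 + s *\<^sub>R h)) has_derivative (\<lambda>s'. W (x0 + s *\<^sub>R h) \<bullet> (s' *\<^sub>R h))) (at s)"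
      by (simp add: o_def)
    moreover have "(\<lambda>s'. W (x0 + s *\<^sub>R h) \<bullet> (s' *\<^sub>R h)) = (*) (p s)"
      by (auto simp: p_def fun_eq_iff)
    ultimately show ?thesis unfolding has_field_derivative_def by simp
  qed
  have dp: "(p has_real_derivative (W' h \<bullet> h)) (at 0)"
  proof -
    have "((\<lambda>s. x0 + s *\<^sub>R h) has_derivative (\<lambda>s'. s' *\<^sub>R h)) (at 0)"
      by (auto intro!: derivative_eq_intros)
    from has_derivative_compose[OF this] dW
    have "((\<lambda>s. W (x0 + s *\<^sub>R h)) has_derivative (\<lambda>s'. W' (s' *\<^sub>R h))) (at 0)"
      by (simp add: o_def)
    then have "(p has_derivative (\<lambda>s'. W' (s' *\<^sub>R h) \<bullet> h)) (at 0)"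
      unfolding p_def by (auto intro!: derivative_eq_intros)
    moreover have "W' (s' *\<^sub>R h) = s' *\<^sub>R W' h" for s'
      using has_derivative_bounded_linear[OF dW] by (simp add: bounded_linear.linear linear_cmul)
    ultimately show ?thesis unfolding has_field_derivative_def
      by (simp add: mult.commute[of _ "W' h \<bullet> h"])
  qed
  have p0: "p 0 = 0" by (simp add: p_def W0)
  have "0 < W' h \<bullet> h" using neg by (simp add: inner_commute)
  then obtain d where d: "d > 0" "\<forall>s>0. s < d \<longrightarrow> p 0 < p (0 + s)"
    using DERIV_pos_inc_right[OF dp] by blast
  obtain \<xi> where xi: "0 < \<xi>" "\<xi> < d/2"
    "g (x0 + (d/2) *\<^sub>R h) - g (x0 + 0 *\<^sub>R h) = (d/2 - 0) * p \<xi>"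
    using MVT2[of 0 "d/2" "\<lambda>s. g (x0 + s *\<^sub>R h)" p] dline d(1) by auto
  have "p \<xi> > 0" using d xi p0 by auto
  then have "(d/2 - 0) * p \<xi> > 0" using d(1) by simp
  then have "g (x0 + (d/2) *\<^sub>R h) > g x0" using xi(3) by simp
  then show False using max by (metis not_le)
qed



lemma max_principle:
  fixes v :: "real \<Rightarrow> real^'n \<Rightarrow> real^'k::finite"
    and vt :: "'k \<Rightarrow> real \<Rightarrow> real^'n \<Rightarrow> real"
    and Dv :: "'k \<Rightarrow> real \<Rightarrow> real^'n \<Rightarrow> real^'n"
    and D2v :: "'k \<Rightarrow> real \<Rightarrow> real^'n \<Rightarrow> real^'n^'n"
    and DF :: "'k \<Rightarrow> real \<Rightarrow> real^'n \<Rightarrow> real^'n \<Rightarrow> real^'n"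
    and A :: "'k \<Rightarrow> real \<Rightarrow> real^'n \<Rightarrow> real^'n^'n"
    and dA :: "'k \<Rightarrow> real \<Rightarrow> real^'n \<Rightarrow> 'n \<Rightarrow> real^'n^'n"
    and q :: "'k \<Rightarrow> real \<Rightarrow> real^'n \<Rightarrow> real^'n"
  assumes Tp: "0 < T'" and D0: "0 \<le> D"
  and cont: "\<And>i. continuous_on ({0..T'} \<times> UNIV) (\<lambda>p. v (fst p) (snd p) $ i)"
  and bnd: "\<And>i t x. 0 \<le> t \<Longrightarrow> t \<le> T' \<Longrightarrow> v t x $ i \<le> B"
  and init: "\<And>i x. v 0 x $ i \<le> 0"
  and dt: "\<And>i t x. 0 < t \<Longrightarrow> t \<le> T' \<Longrightarrow> ((\<lambda>s. v s x $ i) has_real_derivative vt i t x) (at t)"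
  and dx: "\<And>i t x. 0 < t \<Longrightarrow> t \<le> T' \<Longrightarrow> ((\<lambda>y. v t y $ i) has_derivative (\<lambda>h. Dv i t x \<bullet> h)) (at x)"
  and dxx: "\<And>i t x. 0 < t \<Longrightarrow> t \<le> T' \<Longrightarrow> (Dv i t has_derivative (\<lambda>h. D2v i t x *v h)) (at x)"
  and dF: "\<And>i t x. 0 < t \<Longrightarrow> t \<le> T' \<Longrightarrow> ((\<lambda>y. A i t y *v Dv i t y) has_derivative DF i t x) (at x)"
  and dAd: "\<And>i t x. 0 < t \<Longrightarrow> t \<le> T' \<Longrightarrow> (A i t has_derivative (\<lambda>h. \<Sum>\<alpha>\<in>UNIV. h$\<alpha> *\<^sub>R dA i t x \<alpha>)) (at x)"
  and symA: "\<And>i t x. transpose (A i t x) = A i t x"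
  and psdA: "\<And>i t x h. 0 \<le> h \<bullet> (A i t x *v h)"
  and bA: "\<And>i t x. 0 < t \<Longrightarrow> t \<le> T' \<Longrightarrow> norm (A i t x) \<le> D * (1 + norm x)"
  and bdA: "\<And>i t x \<alpha>. 0 < t \<Longrightarrow> t \<le> T' \<Longrightarrow> norm (dA i t x \<alpha>) \<le> D * (1 + norm x)"
  and bq: "\<And>i t x. 0 < t \<Longrightarrow> t \<le> T' \<Longrightarrow> norm (q i t x) \<le> D * (1 + norm x)"
  and H: "\<And>i t x. 0 < t \<Longrightarrow> t \<le> T' \<Longrightarrow> v t x $ i > 0 \<Longrightarrow> (\<forall>j. v t x $ j \<le> v t x $ i) \<Longrightarrow>
          vt i t x - (\<Sum>\<alpha>\<in>UNIV. DF i t x (axis \<alpha> 1) $ \<alpha>) + q i t x \<bullet> Dv i t x \<le> \<beta> * v t x $ i"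
  shows "0 \<le> t \<Longrightarrow> t \<le> T' \<Longrightarrow> v t x $ i \<le> 0"
proof (rule ccontr)
  assume tt: "0 \<le> t" "t \<le> T'" and pos: "\<not> v t x $ i \<le> 0"
  define t1 where "t1 = t"
  define x1 where "x1 = x"
  define i1 where "i1 = i"
  have t1r: "0 \<le> t1" "t1 \<le> T'" and pos1: "v t1 x1 $ i1 > 0" using tt pos by (auto simp: t1_def x1_def i1_def)
  define nn where "nn = real CARD('n)"
  have nn0: "0 \<le> nn" by (simp add: nn_def)
  define M where "M = 4 * D * (2*nn+1) + 1"
  have M1: "1 \<le> M" using D0 nn0 by (simp add: M_def)
  define \<gamma> where "\<gamma> = exp (-\<beta>*t1) * v t1 x1 $ i1"
  have g0: "\<gamma> > 0" using pos1 by (simp add: \<gamma>_def)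
  define \<epsilon> where "\<epsilon> = \<gamma> / (2 * exp (M*T') * (1 + x1 \<bullet> x1))"
  have e0: "\<epsilon> > 0" using g0 by (simp add: \<epsilon>_def add_pos_nonneg)
  define z where "z j s y = exp (-\<beta> * s) * v s y $ j - \<epsilon> * exp (M * s) * (1 + y \<bullet> y)" for j s y
  have z1: "z i1 t1 x1 > 0"
  proof -
    have "exp (M*t1) \<le> exp (M*T')" using t1r M1 by (simp add: mult_left_mono)
    then have "\<epsilon> * exp (M*t1) * (1 + x1 \<bullet> x1) \<le> \<epsilon> * exp (M*T') * (1 + x1 \<bullet> x1)"
      using e0 by (intro mult_right_mono mult_left_mono) (auto simp: add_nonneg_nonneg)
    also have "\<dots> = \<gamma>/2"
    proof -
      define Q where "Q = exp (M*T') * (1 + x1 \<bullet> x1)"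
      have "Q > 0" unfolding Q_def by (simp add: add_pos_nonneg)
      moreover have "\<epsilon> = \<gamma> / (2 * Q)" unfolding \<epsilon>_def Q_def by (simp add: mult.assoc)
      ultimately have "\<epsilon> * Q = \<gamma>/2" by simp
      then show ?thesis by (simp add: Q_def mult.assoc)
    qed
    finally show ?thesis unfolding z_def \<gamma>_def[symmetric] using g0 by simp
  qed
  define Bp where "Bp = exp (\<bar>\<beta>\<bar>*T') * max B 0"
  have Bp: "exp (-\<beta> * s) * v s y $ j \<le> Bp" if "0 \<le> s" "s \<le> T'" for s y j
  proof (cases "v s y $ j \<le> 0")
    case True
    then have "exp (-\<beta> * s) * v s y $ j \<le> 0" by (simp add: mult_nonneg_nonpos)
    also have "0 \<le> Bp" by (simp add: Bp_def)
    finally show ?thesis .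
  next
    case False
    have "-\<beta> * s \<le> \<bar>\<beta>\<bar>*T'"
    proof -
      have "-\<beta> * s \<le> \<bar>\<beta>\<bar> * s" using that by (intro mult_right_mono) auto
      also have "\<dots> \<le> \<bar>\<beta>\<bar>*T'" using that by (simp add: mult_left_mono)
      finally show ?thesis .
    qed
    then have "exp (-\<beta> * s) \<le> exp (\<bar>\<beta>\<bar>*T')" by simp
    moreover have "v s y $ j \<le> max B 0" using bnd[OF that, of y j] by simp
    ultimately show ?thesis unfolding Bp_def using False
      by (intro mult_mono) auto
  qed
  define R where "R = max (norm x1) (Bp/\<epsilon> + 1)"
  have far: "z j s y < 0" if "0 \<le> s" "s \<le> T'" "norm y > R" for s y j
  proof -
    have "0 \<le> Bp" by (simp add: Bp_def)
    then have "0 \<le> Bp/\<epsilon>" using e0 by simp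
    then have "norm y > 1" using that(3) unfolding R_def by linarith
    then have "norm y * 1 \<le> norm y * norm y" by (intro mult_left_mono) auto
    then have "y \<bullet> y \<ge> norm y" by (simp add: power2_norm_eq_inner[symmetric] power2_eq_square)
    then have "y \<bullet> y > Bp/\<epsilon>" using that(3) unfolding R_def by simp
    then have "\<epsilon> * (y \<bullet> y) > Bp" using e0 by (simp add: field_simps)
    moreover have "exp (M * s) \<ge> 1" using that M1 by simp
    then have "1 * (1 + y \<bullet> y) \<le> exp (M * s) * (1 + y \<bullet> y)"
      by (intro mult_right_mono) auto
    then have "\<epsilon> * (1 * (1 + y \<bullet> y)) \<le> \<epsilon> * (exp (M * s) * (1 + y \<bullet> y))"
      using e0 by (intro mult_left_mono) auto
    then have "\<epsilon> + \<epsilon> * (y \<bullet> y) \<le> \<epsilon> * exp (M * s) * (1 + y \<bullet> y)"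
      by (simp add: algebra_simps)
    ultimately show ?thesis unfolding z_def using Bp[OF that(1,2), of y j] e0 by linarith
  qed
  define S where "S = {0..T'} \<times> cball (0::real^'n) R"
  have cS: "compact S" unfolding S_def by (intro compact_Times) auto
  have neS: "S \<noteq> {}" unfolding S_def using Tp R_def by auto
  have contz: "continuous_on S (\<lambda>p. z j (fst p) (snd p))" for j
  proof -
    have cv: "continuous_on S (\<lambda>p. v (fst p) (snd p) $ j)"
      by (rule continuous_on_subset[OF cont]) (auto simp: S_def)
    show ?thesis unfolding z_def
      by (intro continuous_on_diff continuous_on_mult cv) (auto intro!: continuous_intros)
  qed
  have "\<forall>j. \<exists>p\<in>S. \<forall>y\<in>S. z j (fst y) (snd y) \<le> z j (fst p) (snd p)"
    using continuous_attains_sup[OF cS neS contz] by blast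
  then obtain P where P: "\<And>j. P j \<in> S" "\<And>j y. y \<in> S \<Longrightarrow> z j (fst y) (snd y) \<le> z j (fst (P j)) (snd (P j))"
    by metis
  define mz where "mz = Max (range (\<lambda>j. z j (fst (P j)) (snd (P j))))"
  have "mz \<in> range (\<lambda>j. z j (fst (P j)) (snd (P j)))" unfolding mz_def by (rule Max_in) auto
  then obtain i0 where i0: "mz = z i0 (fst (P i0)) (snd (P i0))" by auto
  have mzge: "z j (fst (P j)) (snd (P j)) \<le> mz" for j unfolding mz_def by (rule Max_ge) auto
  define t0 where "t0 = fst (P i0)"
  define x0 where "x0 = snd (P i0)"
  have t0r: "0 \<le> t0" "t0 \<le> T'" using P(1)[of i0] by (auto simp: S_def t0_def)
  have x1S: "(t1, x1) \<in> S" using t1r by (auto simp: S_def R_def)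
  have zpos: "z i0 t0 x0 > 0"
    using z1 P(2)[OF x1S, of i1] mzge[of i1] i0 by (simp add: t0_def x0_def)
  have glob: "z j s y \<le> z i0 t0 x0" if "0 \<le> s" "s \<le> T'" for j s y
  proof (cases "norm y \<le> R")
    case True
    then have "(s, y) \<in> S" using that by (auto simp: S_def)
    then show ?thesis using P(2)[of "(s,y)" j] mzge[of j] i0 by (simp add: t0_def x0_def)
  next
    case False
    then have "z j s y < 0" using far[OF that, of y j] by simp
    then show ?thesis using zpos by simp
  qed
  have t0p: "0 < t0"
  proof (rule ccontr)
    assume "\<not> 0 < t0"
    then have "t0 = 0" using t0r by simp
    then have "z i0 t0 x0 \<le> 0 - \<epsilon> * 1 * (1 + x0 \<bullet> x0)" unfolding z_def using init[of x0 i0] by simp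
    also have "\<dots> < 0" using e0 by (simp add: add_pos_nonneg)
    finally show False using zpos by simp
  qed
  define E where "E = exp (-\<beta>*t0)"
  define G where "G = \<epsilon> * exp (M*t0)"
  have E0: "E > 0" and G0: "G > 0" using e0 by (auto simp: E_def G_def)
  define r where "r = norm x0"
  have r0: "0 \<le> r" by (simp add: r_def)
  have rr: "x0 \<bullet> x0 = r^2" by (simp add: r_def power2_norm_eq_inner)
  have vpos: "v t0 x0 $ i0 > 0"
  proof -
    have "E * v t0 x0 $ i0 > G * (1 + x0 \<bullet> x0)" using zpos unfolding z_def E_def G_def by simp
    moreover have "G * (1 + x0 \<bullet> x0) > 0" using G0 by (simp add: add_pos_nonneg)
    ultimately have "E * v t0 x0 $ i0 > 0" by simp
    then show ?thesis using E0 by (simp add: zero_less_mult_iff)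
  qed
  have vmax: "\<forall>j. v t0 x0 $ j \<le> v t0 x0 $ i0"
  proof
    fix j
    have "z j t0 x0 \<le> z i0 t0 x0" using glob t0r by simp
    then have "E * v t0 x0 $ j \<le> E * v t0 x0 $ i0" unfolding z_def E_def by simp
    then show "v t0 x0 $ j \<le> v t0 x0 $ i0" using E0 by simp
  qed
  have Hi: "vt i0 t0 x0 - (\<Sum>\<alpha>\<in>UNIV. DF i0 t0 x0 (axis \<alpha> 1) $ \<alpha>) + q i0 t0 x0 \<bullet> Dv i0 t0 x0 \<le> \<beta> * v t0 x0 $ i0"
    using H[OF t0p t0r(2) vpos vmax] .
  have tcond: "0 \<le> E * vt i0 t0 x0 - \<beta> * E * v t0 x0 $ i0 - M * G * (1 + x0 \<bullet> x0)"
  proof -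
    have "((\<lambda>s. z i0 s x0) has_real_derivative
       (exp (-\<beta>*t0) * vt i0 t0 x0 + (-\<beta>) * exp (-\<beta>*t0) * v t0 x0 $ i0 - \<epsilon> * (M * exp (M*t0)) * (1 + x0 \<bullet> x0))) (at t0)"
      unfolding z_def using dt[OF t0p t0r(2), of x0 i0]
      by (auto intro!: derivative_eq_intros simp: algebra_simps)
    moreover have "\<forall>s. 0 < s \<and> s < t0 \<longrightarrow> z i0 s x0 \<le> z i0 t0 x0" using glob t0r by auto
    ultimately have "0 \<le> exp (-\<beta>*t0) * vt i0 t0 x0 + (-\<beta>) * exp (-\<beta>*t0) * v t0 x0 $ i0 - \<epsilon> * (M * exp (M*t0)) * (1 + x0 \<bullet> x0)"
      using time_max t0p by blast
    then show ?thesis unfolding E_def G_def by (simp add: algebra_simps)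
  qed
  define W where "W y = E *\<^sub>R Dv i0 t0 y - (2*G) *\<^sub>R y" for y
  have dz: "((\<lambda>y. z i0 t0 y) has_derivative (\<lambda>h. W y \<bullet> h)) (at y)" for y
  proof -
    have "((\<lambda>y. z i0 t0 y) has_derivative (\<lambda>h. E * (Dv i0 t0 y \<bullet> h) - G * (h \<bullet> y + y \<bullet> h))) (at y)"
      unfolding z_def E_def[symmetric] G_def using dx[OF t0p t0r(2), of i0 y]
      by (auto intro!: derivative_eq_intros simp: algebra_simps)
    moreover have "(\<lambda>h. E * (Dv i0 t0 y \<bullet> h) - G * (h \<bullet> y + y \<bullet> h)) = (\<lambda>h. W y \<bullet> h)"
      by (auto simp: fun_eq_iff W_def inner_diff_left inner_commute algebra_simps)
    ultimately show ?thesis by simp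
  qed
  have zmax: "\<forall>y. z i0 t0 y \<le> z i0 t0 x0" using glob t0r by auto
  have W0: "W x0 = 0" by (rule space_max1[OF dz zmax])
  have Dvx: "E *\<^sub>R Dv i0 t0 x0 = (2*G) *\<^sub>R x0" using W0 by (simp add: W_def)
  have dW: "(W has_derivative (\<lambda>h. E *\<^sub>R (D2v i0 t0 x0 *v h) - (2*G) *\<^sub>R h)) (at x0)"
    unfolding W_def using dxx[OF t0p t0r(2), of i0 x0]
    by (auto intro!: derivative_eq_intros simp: algebra_simps)
  have sec: "h \<bullet> (E *\<^sub>R (D2v i0 t0 x0 *v h) - (2*G) *\<^sub>R h) \<le> 0" for h
    using space_max2[OF zmax allI[OF dz] W0 dW] .
  let ?A = "A i0 t0 x0" and ?D2 = "D2v i0 t0 x0" and ?Dv = "Dv i0 t0 x0"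
  define Bm where "Bm = E *\<^sub>R ?D2 - (2*G) *\<^sub>R (mat 1 :: real^'n^'n)"
  have Bmv: "Bm *v h = E *\<^sub>R (?D2 *v h) - (2*G) *\<^sub>R h" for h
    unfolding Bm_def matrix_vector_mult_diff_rdistrib scaleR_matrix_vector_assoc[symmetric] by simp
  have tr0: "(\<Sum>\<alpha>\<in>UNIV. (?A *v (Bm *v axis \<alpha> 1)) $ \<alpha>) \<le> 0"
    by (rule trace_le0[OF symA]) (use psdA sec Bmv in auto)
  have trA: "(\<Sum>\<alpha>\<in>UNIV. (?A *v axis \<alpha> 1) $ \<alpha>) \<le> nn * (D * (1 + r))"
  proof -
    have "(\<Sum>\<alpha>\<in>UNIV. (?A *v axis \<alpha> 1) $ \<alpha>) \<le> (\<Sum>\<alpha>\<in>(UNIV::'n set). D * (1 + r))"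
    proof (rule sum_mono)
      fix \<alpha> :: 'n
      have "(?A *v axis \<alpha> 1) $ \<alpha> \<le> norm ?A * norm (axis \<alpha> (1::real))"
        using mv_comp_le[of ?A "axis \<alpha> 1" \<alpha>] by simp
      also have "\<dots> \<le> D * (1 + r)" using bA[OF t0p t0r(2), of i0 x0] by (simp add: r_def)
      finally show "(?A *v axis \<alpha> 1) $ \<alpha> \<le> D * (1 + r)" .
    qed
    then show ?thesis by (simp add: nn_def)
  qed
  define T2 where "T2 = (\<Sum>\<alpha>\<in>UNIV. (?A *v (?D2 *v axis \<alpha> 1)) $ \<alpha>)"
  have T2b: "E * T2 \<le> 2*G * (nn * (D * (1 + r)))"
  proof -
    have "(\<Sum>\<alpha>\<in>UNIV. (?A *v (Bm *v axis \<alpha> 1)) $ \<alpha>) = E * T2 - 2*G * (\<Sum>\<alpha>\<in>UNIV. (?A *v axis \<alpha> 1) $ \<alpha>)"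
      unfolding Bmv T2_def
      by (simp add: matrix_vector_mult_diff_distrib matrix_vector_mult_scaleR sum_subtractf sum_distrib_left)
    then show ?thesis using tr0 trA G0 by (smt (verit) mult_left_mono)
  qed
  define T1 where "T1 = (\<Sum>\<alpha>\<in>UNIV. (dA i0 t0 x0 \<alpha> *v ?Dv) $ \<alpha>)"
  have DFeq: "DF i0 t0 x0 = (\<lambda>h. ?A *v (?D2 *v h) + (\<Sum>\<alpha>\<in>UNIV. h$\<alpha> *\<^sub>R dA i0 t0 x0 \<alpha>) *v ?Dv)"
    using has_derivative_unique[OF dF[OF t0p t0r(2)]
        bounded_bilinear.FDERIV[OF bb_mv dAd[OF t0p t0r(2)] dxx[OF t0p t0r(2)]]] .
  have div: "(\<Sum>\<alpha>\<in>UNIV. DF i0 t0 x0 (axis \<alpha> 1) $ \<alpha>) = T2 + T1"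
    unfolding DFeq T1_def T2_def axis_sum by (simp add: sum.distrib)
  have T1b: "E * T1 \<le> nn * (D * (1 + r)) * (2*G*r)"
  proof -
    have "E * T1 = (\<Sum>\<alpha>\<in>UNIV. (dA i0 t0 x0 \<alpha> *v (E *\<^sub>R ?Dv)) $ \<alpha>)"
      unfolding T1_def by (simp add: sum_distrib_left matrix_vector_mult_scaleR)
    also have "\<dots> = (\<Sum>\<alpha>\<in>UNIV. (dA i0 t0 x0 \<alpha> *v ((2*G) *\<^sub>R x0)) $ \<alpha>)" using Dvx by simp
    also have "\<dots> \<le> (\<Sum>\<alpha>\<in>(UNIV::'n set). D * (1 + r) * (2*G*r))"
    proof (rule sum_mono)
      fix \<alpha>
      have "(dA i0 t0 x0 \<alpha> *v ((2*G) *\<^sub>R x0)) $ \<alpha> \<le> norm (dA i0 t0 x0 \<alpha>) * norm ((2*G) *\<^sub>R x0)"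
        using mv_comp_le by (metis abs_le_D1)
      also have "\<dots> \<le> D * (1 + r) * (2*G*r)"
        using bdA[OF t0p t0r(2), of i0 x0 \<alpha>] G0 D0 by (intro mult_mono) (auto simp: r_def)
      finally show "(dA i0 t0 x0 \<alpha> *v ((2*G) *\<^sub>R x0)) $ \<alpha> \<le> D * (1 + r) * (2*G*r)" .
    qed
    finally show ?thesis by (simp add: nn_def)
  qed
  have qb: "- (E * (q i0 t0 x0 \<bullet> ?Dv)) \<le> D * (1 + r) * (2*G*r)"
  proof -
    have "- (E * (q i0 t0 x0 \<bullet> ?Dv)) = - (q i0 t0 x0 \<bullet> ((2*G) *\<^sub>R x0))"
      using Dvx by (metis inner_scaleR_right)
    also have "\<dots> \<le> norm (q i0 t0 x0) * norm ((2*G) *\<^sub>R x0)"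
      by (metis Cauchy_Schwarz_ineq2 abs_le_D2)
    also have "\<dots> \<le> D * (1 + r) * (2*G*r)"
      using bq[OF t0p t0r(2), of i0 x0] G0 D0 by (intro mult_mono) (auto simp: r_def)
    finally show ?thesis .
  qed
  have "M * G * (1 + r^2) \<le> E * T2 + E * T1 - E * (q i0 t0 x0 \<bullet> ?Dv)"
  proof -
    have "E * (vt i0 t0 x0 - (T2 + T1) + q i0 t0 x0 \<bullet> ?Dv) \<le> E * (\<beta> * v t0 x0 $ i0)"
      using Hi div E0 by (simp add: mult_left_mono)
    then show ?thesis using tcond rr by (simp add: algebra_simps)
  qed
  also have "\<dots> \<le> 2*G * (nn * (D * (1 + r))) + nn * (D * (1 + r)) * (2*G*r) + D * (1 + r) * (2*G*r)"
    using T1b T2b qb by linarith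
  also have "\<dots> = 2*G * (D * ((1 + r) * (nn * r + nn + r)))" by (simp add: algebra_simps)
  also have "\<dots> \<le> 2*G * (D * ((2*nn+1) * (2 * (1 + r^2))))"
  proof -
    have "(1 + r) * (nn * r + nn + r) \<le> (1+r) * ((2*nn+1) * (1 + r))"
      using r0 nn0 by (intro mult_left_mono) (auto simp: algebra_simps)
    also have "\<dots> = (2*nn+1) * (1+r)^2" by (simp add: power2_eq_square)
    also have "\<dots> \<le> (2*nn+1) * (2 * (1 + r^2))"
    proof -
      have "0 \<le> (r - 1)^2" by simp
      then have "(1+r)^2 \<le> 2 * (1 + r^2)" by (simp add: power2_eq_square algebra_simps)
      then show ?thesis using nn0 by (intro mult_left_mono) auto
    qed
    finally show ?thesis using G0 D0 by (intro mult_left_mono) auto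
  qed
  also have "\<dots> = (M - 1) * G * (1 + r^2)" by (simp add: M_def algebra_simps)
  finally have "M * G * (1 + r^2) \<le> (M - 1) * G * (1 + r^2)" .
  then have "G * (1 + r^2) \<le> 0" by (simp add: algebra_simps)
  moreover have "G * (1 + r^2) > 0" using G0 by (simp add: add_pos_nonneg)
  ultimately show False by simp
qed



lemma shift_nat: "(\<And>s. g (s + p) = g s) \<Longrightarrow> g (s + real n * p) = g s"
proof (induction n arbitrary: s)
  case 0 then show ?case by simp
next
  case (Suc n)
  have "g (s + real (Suc n) * p) = g ((s + real n * p) + p)" by (simp add: algebra_simps)
  also have "\<dots> = g (s + real n * p)" using Suc.prems by simp
  also have "\<dots> = g s" using Suc by simp
  finally show ?case .
qed

lemma shift_int:
  assumes "\<And>s. g (s + p) = g s"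
  shows "g (s + real_of_int k * p) = g s"
proof (cases "k \<ge> 0")
  case True
  then obtain n where "k = int n" by (metis nonneg_eq_int)
  then show ?thesis using shift_nat[of g p s n] assms by simp
next
  case False
  then obtain n where k: "k = - int n" by (metis neg_0_le_iff_le nonneg_eq_int not_le minus_minus le_less)
  have "g s = g ((s - real n * p) + real n * p)" by simp
  also have "\<dots> = g (s - real n * p)" using shift_nat[of g p "s - real n * p" n] assms by simp
  finally show ?thesis using k by simp
qed

lemma powr_le_1plus: "0 \<le> x \<Longrightarrow> 0 \<le> a \<Longrightarrow> a \<le> 1 \<Longrightarrow> x powr a \<le> 1 + (x::real)"
proof (cases "x \<le> 1")
  case True
  assume "0 \<le> x" "0 \<le> a" "a \<le> 1"
  then have "x powr a \<le> 1"
    using True by (cases "x = 0") (auto intro: powr_le1)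
  then show ?thesis using \<open>0 \<le> x\<close> by simp
next
  case False
  assume "0 \<le> x" "0 \<le> a" "a \<le> 1"
  then have "x powr a \<le> x powr 1" using False by (intro powr_mono) auto
  then show ?thesis using False by simp
qed

lemma holder_growth:
  fixes f :: "real \<Rightarrow> real^'n \<Rightarrow> 'b::real_normed_vector"
  assumes h: "holder_tx \<delta> f" and d: "0 < \<delta>" "\<delta> < 1" and T: "0 \<le> T'"
  shows "\<exists>D\<ge>0. \<forall>t x. 0 \<le> t \<longrightarrow> t \<le> T' \<longrightarrow> norm (f t x) \<le> D * (1 + norm x)"
proof -
  obtain C where C: "\<And>t s x y. norm (f t x - f s y) \<le> C * (\<bar>t - s\<bar> powr (\<delta> / 2) + norm (x - y) powr \<delta>)"
    using h unfolding holder_tx_def by blast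
  define D where "D = norm (f 0 0) + \<bar>C\<bar> * (2 + T')"
  show ?thesis
  proof (intro exI conjI allI impI)
    show "0 \<le> D" using T by (simp add: D_def)
    fix t :: real and x :: "real^'n" assume t: "0 \<le> t" "t \<le> T'"
    have p1: "\<bar>t - 0\<bar> powr (\<delta>/2) \<le> 1 + T'"
      using powr_le_1plus[of "\<bar>t\<bar>" "\<delta>/2"] d t by simp
    have p2: "norm (x - 0) powr \<delta> \<le> 1 + norm x"
      using powr_le_1plus[of "norm x" \<delta>] d by simp
    have "norm (f t x) \<le> norm (f 0 0) + norm (f t x - f 0 0)" by (metis norm_triangle_sub add.commute)
    also have "norm (f t x - f 0 0) \<le> C * (\<bar>t - 0\<bar> powr (\<delta> / 2) + norm (x - 0) powr \<delta>)" by (rule C)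
    also have "\<dots> \<le> \<bar>C\<bar> * (\<bar>t - 0\<bar> powr (\<delta> / 2) + norm (x - 0) powr \<delta>)"
      by (intro mult_right_mono) auto
    also have "\<dots> \<le> \<bar>C\<bar> * ((1 + T') + (1 + norm x))"
      using p1 p2 by (intro mult_left_mono) auto
    finally have "norm (f t x) \<le> norm (f 0 0) + \<bar>C\<bar> * (2 + T') + \<bar>C\<bar> * norm x"
      by (simp add: algebra_simps)
    also have "\<dots> \<le> D * (1 + norm x)"
    proof -
      have "\<bar>C\<bar> * 1 \<le> \<bar>C\<bar> * (2 + T')" using T by (intro mult_left_mono) auto
      then have "\<bar>C\<bar> \<le> D" unfolding D_def using norm_ge_zero[of "f 0 0"] by linarith
      then have "\<bar>C\<bar> * norm x \<le> D * norm x" by (intro mult_right_mono) auto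
      then show ?thesis unfolding D_def by (simp add: algebra_simps)
    qed
    finally show "norm (f t x) \<le> D * (1 + norm x)" .
  qed
qed

lemma periodic_bounded:
  fixes f :: "real \<Rightarrow> real^'n \<Rightarrow> 'b::real_normed_vector"
  assumes per: "periodic_tx T L f" and h: "holder_tx \<delta> f" and d: "0 < \<delta>" "\<delta> < 1"
    and T: "0 < T" and L: "\<forall>\<alpha>. L $ \<alpha> > 0"
  shows "\<exists>C. \<forall>t x. norm (f t x) \<le> C"
proof -
  have pt: "\<And>t x. f (t + T) x = f t x" and px: "\<And>t x \<alpha>. f t (x + (L $ \<alpha>) *\<^sub>R axis \<alpha> 1) = f t x"
    using per unfolding periodic_tx_def by auto
  obtain C where C: "\<And>t s x y. norm (f t x - f s y) \<le> C * (\<bar>t - s\<bar> powr (\<delta> / 2) + norm (x - y) powr \<delta>)"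
    using h unfolding holder_tx_def by blast
  have shx: "f t (y + (real_of_int k * L $ \<alpha>) *\<^sub>R axis \<alpha> 1) = f t y" for t y k \<alpha>
  proof -
    let ?g = "\<lambda>s. f t (y + s *\<^sub>R axis \<alpha> 1)"
    have "\<And>s. ?g (s + L $ \<alpha>) = ?g s"
    proof -
      fix s
      have "y + (s + L $ \<alpha>) *\<^sub>R axis \<alpha> 1 = (y + s *\<^sub>R axis \<alpha> 1) + (L $ \<alpha>) *\<^sub>R axis \<alpha> 1"
        by (simp add: algebra_simps)
      then have "?g (s + L $ \<alpha>) = f t ((y + s *\<^sub>R axis \<alpha> 1) + (L $ \<alpha>) *\<^sub>R axis \<alpha> 1)"
        by (simp only:)
      also have "\<dots> = ?g s" by (rule px)
      finally show "?g (s + L $ \<alpha>) = ?g s" .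
    qed
    from shift_int[of ?g, OF this, of 0 k] show ?thesis by simp
  qed
  have shF: "finite F \<Longrightarrow> f t (y - (\<Sum>\<alpha>\<in>F. (real_of_int (k \<alpha>) * L $ \<alpha>) *\<^sub>R axis \<alpha> 1)) = f t y" for F t y k
  proof (induction F rule: finite_induct)
    case empty then show ?case by simp
  next
    case (insert \<beta> F)
    have "y - (\<Sum>\<alpha>\<in>insert \<beta> F. (real_of_int (k \<alpha>) * L $ \<alpha>) *\<^sub>R axis \<alpha> 1)
      = (y - (\<Sum>\<alpha>\<in>F. (real_of_int (k \<alpha>) * L $ \<alpha>) *\<^sub>R axis \<alpha> 1)) + (real_of_int (- k \<beta>) * L $ \<beta>) *\<^sub>R axis \<beta> 1"
      using insert by (simp add: algebra_simps)
    then have "f t (y - (\<Sum>\<alpha>\<in>insert \<beta> F. (real_of_int (k \<alpha>) * L $ \<alpha>) *\<^sub>R axis \<alpha> 1))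
      = f t (y - (\<Sum>\<alpha>\<in>F. (real_of_int (k \<alpha>) * L $ \<alpha>) *\<^sub>R axis \<alpha> 1))" by (simp only: shx)
    then show ?case using insert.IH by simp
  qed
  define SL where "SL = (\<Sum>\<alpha>\<in>UNIV. L $ \<alpha>)"
  define C' where "C' = norm (f 0 0) + \<bar>C\<bar> * (T powr (\<delta>/2) + SL powr \<delta>)"
  show ?thesis
  proof (intro exI allI)
    fix t :: real and x :: "real^'n"
    define kt where "kt = \<lfloor>t / T\<rfloor>"
    define s where "s = t + real_of_int (- kt) * T"
    have fs: "f s x = f t x" unfolding s_def using shift_int[of "\<lambda>s. f s x" T t "- kt"] pt by simp
    have s0: "0 \<le> s" "s \<le> T"
    proof -
      have "real_of_int kt \<le> t / T" "t / T < real_of_int kt + 1" unfolding kt_def by linarith+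
      then have "real_of_int kt * T \<le> t" "t < (real_of_int kt + 1) * T" using T by (simp_all add: field_simps)
      then show "0 \<le> s" "s \<le> T" unfolding s_def by (simp_all add: algebra_simps)
    qed
    define k where "k \<alpha> = \<lfloor>x $ \<alpha> / L $ \<alpha>\<rfloor>" for \<alpha>
    define y where "y = x - (\<Sum>\<alpha>\<in>UNIV. (real_of_int (k \<alpha>) * L $ \<alpha>) *\<^sub>R axis \<alpha> 1)"
    have fy: "f s y = f s x" unfolding y_def by (rule shF) simp
    have yc: "y $ \<alpha> = x $ \<alpha> - real_of_int (k \<alpha>) * L $ \<alpha>" for \<alpha>
    proof -
      have "(\<Sum>\<beta>\<in>UNIV. (real_of_int (k \<beta>) * L $ \<beta>) *\<^sub>R axis \<beta> (1::real)) $ \<alpha> = real_of_int (k \<alpha>) * L $ \<alpha>"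
        by (simp add: sum_component axis_def if_distrib cong: if_cong)
      then show ?thesis unfolding y_def by simp
    qed
    have ya: "\<bar>y $ \<alpha>\<bar> \<le> L $ \<alpha>" for \<alpha>
    proof -
      have Lp: "L $ \<alpha> > 0" using L by blast
      have "real_of_int (k \<alpha>) \<le> x $ \<alpha> / L $ \<alpha>" "x $ \<alpha> / L $ \<alpha> < real_of_int (k \<alpha>) + 1" unfolding k_def by linarith+
      then have "real_of_int (k \<alpha>) * L $ \<alpha> \<le> x $ \<alpha>" "x $ \<alpha> < (real_of_int (k \<alpha>) + 1) * L $ \<alpha>"
        using Lp by (simp_all add: field_simps)
      then show ?thesis unfolding yc by (simp add: algebra_simps)
    qed
    have ny: "norm y \<le> SL"
    proof -
      have "norm y \<le> (\<Sum>\<alpha>\<in>UNIV. \<bar>y $ \<alpha>\<bar>)" by (rule norm_le_l1_cart)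
      also have "\<dots> \<le> SL" unfolding SL_def by (rule sum_mono) (rule ya)
      finally show ?thesis .
    qed
    have "norm (f t x) = norm (f s y)" using fs fy by simp
    also have "\<dots> \<le> norm (f 0 0) + norm (f s y - f 0 0)" by (metis norm_triangle_sub add.commute)
    also have "norm (f s y - f 0 0) \<le> C * (\<bar>s - 0\<bar> powr (\<delta> / 2) + norm (y - 0) powr \<delta>)" by (rule C)
    also have "\<dots> \<le> \<bar>C\<bar> * (\<bar>s - 0\<bar> powr (\<delta> / 2) + norm (y - 0) powr \<delta>)"
      by (intro mult_right_mono) auto
    also have "\<dots> \<le> \<bar>C\<bar> * (T powr (\<delta>/2) + SL powr \<delta>)"
      using s0 ny d by (intro mult_left_mono add_mono powr_mono2) auto
    finally show "norm (f t x) \<le> C'" unfolding C'_def by simp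
  qed
qed



lemma lower_rhs:
  fixes l c w :: "'k::finite \<Rightarrow> real"
  assumes l0: "\<forall>j. j \<noteq> i \<longrightarrow> 0 \<le> l j" and c0: "\<forall>j. 0 \<le> c j" and wmin: "\<forall>j. w i \<le> w j"
    and wneg: "w i < 0" and lb: "\<forall>j. l j \<le> Lb" and cb: "\<forall>j. c j \<le> Cb" and bu: "- w i \<le> Bu"
  shows "(real CARD('k) * Lb + real CARD('k) * Cb * Bu) * w i \<le> (\<Sum>j\<in>UNIV. l j * w j) - w i * (\<Sum>j\<in>UNIV. c j * w j)"
proof -
  define N where "N = real CARD('k)"
  have s1: "(\<Sum>j\<in>UNIV. l j * w i) \<le> (\<Sum>j\<in>UNIV. l j * w j)"
  proof (rule sum_mono)
    fix j show "l j * w i \<le> l j * w j"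
      using l0 wmin by (cases "j = i") (auto intro: mult_left_mono)
  qed
  have sl: "(\<Sum>j\<in>UNIV. l j) \<le> N * Lb" unfolding N_def using lb sum_bounded_above[of UNIV l Lb] by simp
  have s1': "N * Lb * w i \<le> (\<Sum>j\<in>UNIV. l j) * w i" using sl wneg by (intro mult_right_mono_neg) auto
  have s2: "(\<Sum>j\<in>UNIV. c j * w i) \<le> (\<Sum>j\<in>UNIV. c j * w j)"
    by (rule sum_mono) (use c0 wmin in \<open>auto intro: mult_left_mono\<close>)
  have sc: "(\<Sum>j\<in>UNIV. c j) \<le> N * Cb" unfolding N_def using cb sum_bounded_above[of UNIV c Cb] by simp
  have s2': "N * Cb * w i \<le> (\<Sum>j\<in>UNIV. c j) * w i" using sc wneg by (intro mult_right_mono_neg) auto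
  have Cb0: "0 \<le> Cb" using c0 cb by (meson order_trans)
  have N0: "0 \<le> N" unfolding N_def by simp
  have "N * Cb * w i \<le> (\<Sum>j\<in>UNIV. c j * w j)" using s2 s2' by (simp add: sum_distrib_right)
  then have t2: "(- w i) * (N * Cb * w i) \<le> (- w i) * (\<Sum>j\<in>UNIV. c j * w j)"
    using wneg by (intro mult_left_mono) auto
  have "N * Cb * w i \<le> 0" using Cb0 N0 wneg by (simp add: mult_nonneg_nonpos)
  then have t3: "(N * Cb * w i) * Bu \<le> (N * Cb * w i) * (- w i)"
    using bu by (intro mult_left_mono_neg) auto
  have t1: "N * Lb * w i \<le> (\<Sum>j\<in>UNIV. l j * w j)" using s1 s1' by (simp add: sum_distrib_right)
  show ?thesis using t1 t2 t3 unfolding N_def[symmetric] by (simp add: algebra_simps)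
qed

lemma upper_rhs:
  fixes l c w :: "'k::finite \<Rightarrow> real"
  assumes l0: "\<forall>j. j \<noteq> i \<longrightarrow> 0 \<le> l j" and c0: "\<forall>j. 0 \<le> c j" and wnn: "\<forall>j. 0 \<le> w j"
    and wmax: "\<forall>j. w j \<le> w i" and lb: "\<forall>j. l j \<le> Lb" and ci: "cm \<le> c i"
  shows "(\<Sum>j\<in>UNIV. l j * w j) - w i * (\<Sum>j\<in>UNIV. c j * w j) \<le> real CARD('k) * Lb * w i - cm * (w i)^2"
proof -
  define N where "N = real CARD('k)"
  have s1: "(\<Sum>j\<in>UNIV. l j * w j) \<le> (\<Sum>j\<in>UNIV. l j * w i)"
  proof (rule sum_mono)
    fix j show "l j * w j \<le> l j * w i"
      using l0 wmax by (cases "j = i") (auto intro: mult_left_mono)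
  qed
  have sl: "(\<Sum>j\<in>UNIV. l j) \<le> N * Lb" unfolding N_def using lb sum_bounded_above[of UNIV l Lb] by simp
  have s1': "(\<Sum>j\<in>UNIV. l j) * w i \<le> N * Lb * w i" using sl wnn by (intro mult_right_mono) auto
  have "c i * w i \<le> (\<Sum>j\<in>UNIV. c j * w j)"
    by (rule member_le_sum[where f="\<lambda>j. c j * w j"]) (use c0 wnn in auto)
  moreover have "cm * w i \<le> c i * w i" using ci wnn by (intro mult_right_mono) auto
  ultimately have "cm * w i \<le> (\<Sum>j\<in>UNIV. c j * w j)" by simp
  then have t2: "w i * (cm * w i) \<le> w i * (\<Sum>j\<in>UNIV. c j * w j)" using wnn by (intro mult_left_mono) auto
  have e: "(\<Sum>j\<in>UNIV. l j * w i) = (\<Sum>j\<in>UNIV. l j) * w i" by (simp add: sum_distrib_right)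
  have "(\<Sum>j\<in>UNIV. l j * w j) - w i * (\<Sum>j\<in>UNIV. c j * w j) \<le> N * Lb * w i - w i * (cm * w i)"
    using s1 s1' t2 e by linarith
  then show ?thesis unfolding N_def by (simp add: power2_eq_square algebra_simps)
qed

lemma ode_ineq:
  fixes c0 \<kappa> y U w :: real
  assumes "0 < c0" "0 \<le> \<kappa>" "0 \<le> y" "w = \<kappa> + y" "w \<le> U"
  shows "c0 * \<kappa> * U - c0 * U^2 + c0 * y^2 \<le> c0 * \<kappa> * (U - w)"
proof -
  have w0: "0 \<le> w" using assms by simp
  have "w^2 \<le> U^2" using assms w0 by (intro power_mono) auto
  moreover have "w^2 = \<kappa> * w + y^2 + y * \<kappa>" using assms(4) by (simp add: power2_eq_square algebra_simps)
  moreover have "0 \<le> y * \<kappa>" using assms by simp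
  ultimately have "\<kappa> * w + y^2 \<le> U^2" by linarith
  then have "c0 * (\<kappa> * w + y^2) \<le> c0 * U^2" using assms(1) by (intro mult_left_mono) auto
  then show ?thesis by (simp add: algebra_simps)
qed

lemma finite_growth:
  fixes f :: "'j::finite \<Rightarrow> real \<Rightarrow> real^'n \<Rightarrow> 'b::real_normed_vector"
  assumes "\<forall>j. \<exists>D\<ge>0. \<forall>t x. P t \<longrightarrow> norm (f j t x) \<le> D * (1 + norm x)"
  shows "\<exists>D\<ge>0. \<forall>j t x. P t \<longrightarrow> norm (f j t x) \<le> D * (1 + norm x)"
proof -
  obtain Df where Df: "\<And>j. Df j \<ge> 0" "\<And>j t x. P t \<Longrightarrow> norm (f j t x) \<le> Df j * (1 + norm x)"
    using assms by metis
  define D where "D = (\<Sum>j\<in>UNIV. Df j)"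
  have "Df j \<le> D" for j unfolding D_def by (rule member_le_sum) (use Df in auto)
  show ?thesis
  proof (intro exI conjI allI impI)
    show "0 \<le> D" unfolding D_def by (rule sum_nonneg) (use Df in auto)
    fix j t x assume "P t"
    have "norm (f j t x) \<le> Df j * (1 + norm x)" using Df \<open>P t\<close> by blast
    also have "\<dots> \<le> D * (1 + norm x)" using \<open>Df j \<le> D\<close> by (intro mult_right_mono) auto
    finally show "norm (f j t x) \<le> D * (1 + norm x)" .
  qed
qed



theorem proposition2p1:
  fixes T :: real and L :: "real^'n"
    and A :: "'k::finite \<Rightarrow> real \<Rightarrow> real^'n \<Rightarrow> real^'n^'n"
    and q :: "'k \<Rightarrow> real \<Rightarrow> real^'n \<Rightarrow> real^'n"
    and Lc Cc :: "real \<Rightarrow> real^'n \<Rightarrow> real^'k^'k"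
  assumes "standing_assumptions T L A q Lc Cc"
  shows "\<exists>K>0. \<forall>(u0 :: real^'n \<Rightarrow> real^'k) (u :: real \<Rightarrow> real^'n \<Rightarrow> real^'k).
           bounded (range u0) \<and> continuous_on UNIV u0 \<and> (\<forall>y j. u0 y $ j \<ge> 0) \<and>
           kpp_solution A q Lc Cc u0 u \<longrightarrow>
             (\<forall>i t x. t \<ge> 0 \<longrightarrow> u t x $ i \<le> K + (SUP y. Max (range (\<lambda>j. u0 y $ j)))) \<and>
             Limsup at_top (\<lambda>t. ereal (SUP x. Max (range (\<lambda>i. u t x $ i)))) \<le> ereal K"
proof -
  note SA = assms[unfolded standing_assumptions_def]
  note S2 = SA[THEN conjunct2] and S3 = SA[THEN conjunct2, THEN conjunct2]
  note S4 = S3[THEN conjunct2] and S5 = S3[THEN conjunct2, THEN conjunct2]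
  note S6 = S5[THEN conjunct2] and S7 = S5[THEN conjunct2, THEN conjunct2]
  note S8 = S7[THEN conjunct2] and S9 = S7[THEN conjunct2, THEN conjunct2]
  note S10 = S9[THEN conjunct2] and S11 = S9[THEN conjunct2, THEN conjunct2]
  have Tpos: "T > 0" by (rule SA[THEN conjunct1])
  have Lpos: "\<forall>\<alpha>. L $ \<alpha> > 0" by (rule S2[THEN conjunct1])
  have perL: "periodic_tx T L Lc" by (rule S4[THEN conjunct1])
  have perC: "periodic_tx T L Cc" by (rule S5[THEN conjunct1])
  obtain \<delta> where dl: "0 < \<delta>" "\<delta> < 1" and hL: "holder_tx \<delta> Lc" and hC: "holder_tx \<delta> Cc"
    and hqA: "\<forall>i. holder_tx \<delta> (q i) \<and> holder_tx_C1 \<delta> (A i)"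
    using S6[THEN conjunct1] by (elim exE conjE)
  have symA: "\<And>i t x. transpose (A i t x) = A i t x" using S7[THEN conjunct1] by blast
  obtain \<mu> where mu: "\<mu> > 0" "\<forall>i t x y. norm y = 1 \<longrightarrow> y \<bullet> (A i t x *v y) \<ge> \<mu>"
    using S8[THEN conjunct1] by (elim exE conjE)
  have offd: "\<And>i j t x. i \<noteq> j \<Longrightarrow> Lc t x $ i $ j \<ge> 0" using S9[THEN conjunct1] by blast
  have infC: "\<And>i j. (INF tx. Cc (fst tx) (snd tx) $ i $ j) > 0" using S11 by blast
  have psdA: "\<And>i t x h. 0 \<le> h \<bullet> (A i t x *v h)"
  proof -
    fix i t x and h :: "real^'n"
    show "0 \<le> h \<bullet> (A i t x *v h)"
    proof (cases "h = 0")
      case True then show ?thesis by simp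
    next
      case False
      define y where "y = (1 / norm h) *\<^sub>R h"
      have ny: "norm y = 1" using False by (simp add: y_def)
      have hy: "h = norm h *\<^sub>R y" using False by (simp add: y_def)
      have "h \<bullet> (A i t x *v h) = (norm h)^2 * (y \<bullet> (A i t x *v y))"
        by (subst (1 2) hy) (simp add: matrix_vector_mult_scaleR power2_eq_square)
      moreover have "y \<bullet> (A i t x *v y) \<ge> \<mu>" using mu(2) ny by blast
      then have "y \<bullet> (A i t x *v y) \<ge> 0" using mu(1) by linarith
      ultimately show ?thesis by simp
    qed
  qed
  obtain Lb where Lb: "\<And>t x. norm (Lc t x) \<le> Lb" using periodic_bounded[OF perL hL dl Tpos Lpos] by blast
  obtain Cb where Cb: "\<And>t x. norm (Cc t x) \<le> Cb" using periodic_bounded[OF perC hC dl Tpos Lpos] by blast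
  have comp2: "\<bar>M $ i $ j\<bar> \<le> norm M" for M :: "real^'k^'k" and i j
    using component_le_norm_cart[of "M $ i" j] Finite_Cartesian_Product.norm_nth_le[of M i] by linarith
  have lb: "\<bar>Lc t x $ i $ j\<bar> \<le> Lb" for t x i j using Lb[of t x] comp2[of "Lc t x" i j] by linarith
  have cb: "\<bar>Cc t x $ i $ j\<bar> \<le> Cb" for t x i j using Cb[of t x] comp2[of "Cc t x" i j] by linarith
  have Lb0: "0 \<le> Lb" using Lb[of 0 0] norm_ge_zero[of "Lc 0 0"] by linarith
  have bddC: "bdd_below (range (\<lambda>tx. Cc (fst tx) (snd tx) $ i $ j))" for i j
  proof (rule bdd_belowI[where m="- Cb"])
    fix z assume "z \<in> range (\<lambda>tx. Cc (fst tx) (snd tx) $ i $ j)"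
    then obtain tx where "z = Cc (fst tx) (snd tx) $ i $ j" by blast
    then show "- Cb \<le> z" using cb[of "fst tx" "snd tx" i j] by (simp add: abs_le_iff)
  qed
  define c0 where "c0 = Min (range (\<lambda>i. INF tx. Cc (fst tx) (snd tx) $ i $ i))"
  have c0pos: "c0 > 0"
  proof -
    have "c0 \<in> range (\<lambda>i. INF tx. Cc (fst tx) (snd tx) $ i $ i)" unfolding c0_def by (rule Min_in) auto
    then show ?thesis using infC by auto
  qed
  have c0le: "\<And>t x i. c0 \<le> Cc t x $ i $ i"
  proof -
    fix t x i
    have "c0 \<le> (INF tx. Cc (fst tx) (snd tx) $ i $ i)" unfolding c0_def by (rule Min_le) auto
    also have "\<dots> \<le> Cc (fst (t,x)) (snd (t,x)) $ i $ i"
      by (rule cINF_lower[OF bddC]) simp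
    finally show "c0 \<le> Cc t x $ i $ i" by simp
  qed
  have cnn: "\<And>t x i j. 0 \<le> Cc t x $ i $ j"
  proof -
    fix t x i j
    have "0 < (INF tx. Cc (fst tx) (snd tx) $ i $ j)" by (rule infC)
    also have "\<dots> \<le> Cc (fst (t,x)) (snd (t,x)) $ i $ j"
      by (rule cINF_lower[OF bddC]) simp
    finally show "0 \<le> Cc t x $ i $ j" by simp
  qed
  obtain dA where dA: "\<And>i t x. (A i t has_derivative (\<lambda>h. \<Sum>\<alpha>\<in>UNIV. h$\<alpha> *\<^sub>R dA i t x \<alpha>)) (at x)"
    and hdA: "\<And>i \<alpha>. holder_tx \<delta> (\<lambda>t x. dA i t x \<alpha>)"
  proof -
    have "\<forall>i. \<exists>df :: real \<Rightarrow> real^'n \<Rightarrow> 'n \<Rightarrow> real^'n^'n.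
        (\<forall>t x. (A i t has_derivative (\<lambda>h. \<Sum>\<alpha>\<in>UNIV. (h $ \<alpha>) *\<^sub>R df t x \<alpha>)) (at x)) \<and>
        (\<forall>\<alpha>. holder_tx \<delta> (\<lambda>t x. df t x \<alpha>))"
      using hqA unfolding holder_tx_C1_def by blast
    then have "\<exists>dA. \<forall>i. (\<forall>t x. (A i t has_derivative (\<lambda>h. \<Sum>\<alpha>\<in>UNIV. (h $ \<alpha>) *\<^sub>R dA i t x \<alpha>)) (at x)) \<and>
        (\<forall>\<alpha>. holder_tx \<delta> (\<lambda>t x. dA i t x \<alpha>))" by (rule choice)
    then show ?thesis using that by blast
  qed
  have growth: "\<exists>D\<ge>0. \<forall>i t x \<alpha>. 0 \<le> t \<longrightarrow> t \<le> T' \<longrightarrow>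
      norm (A i t x) \<le> D * (1 + norm x) \<and> norm (dA i t x \<alpha>) \<le> D * (1 + norm x) \<and> norm (q i t x) \<le> D * (1 + norm x)"
    if T0: "0 \<le> T'" for T'
  proof -
    have hA: "holder_tx \<delta> (A i)" for i using hqA unfolding holder_tx_C1_def by blast
    have hq: "holder_tx \<delta> (q i)" for i using hqA by blast
    have gA: "\<forall>i. \<exists>D\<ge>0. \<forall>t x. (0 \<le> t \<and> t \<le> T') \<longrightarrow> norm (A i t x) \<le> D * (1 + norm x)"
    proof
      fix i
      obtain D where "D \<ge> 0" "\<forall>t x. 0 \<le> t \<longrightarrow> t \<le> T' \<longrightarrow> norm (A i t x) \<le> D * (1 + norm x)"
        using holder_growth[OF hA[of i] dl T0] by (elim exE conjE)
      then show "\<exists>D\<ge>0. \<forall>t x. (0 \<le> t \<and> t \<le> T') \<longrightarrow> norm (A i t x) \<le> D * (1 + norm x)" by blast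
    qed
    have gq: "\<forall>i. \<exists>D\<ge>0. \<forall>t x. (0 \<le> t \<and> t \<le> T') \<longrightarrow> norm (q i t x) \<le> D * (1 + norm x)"
    proof
      fix i
      obtain D where "D \<ge> 0" "\<forall>t x. 0 \<le> t \<longrightarrow> t \<le> T' \<longrightarrow> norm (q i t x) \<le> D * (1 + norm x)"
        using holder_growth[OF hq[of i] dl T0] by (elim exE conjE)
      then show "\<exists>D\<ge>0. \<forall>t x. (0 \<le> t \<and> t \<le> T') \<longrightarrow> norm (q i t x) \<le> D * (1 + norm x)" by blast
    qed
    have gdA: "\<forall>p. \<exists>D\<ge>0. \<forall>t x. (0 \<le> t \<and> t \<le> T') \<longrightarrow> norm (dA (fst p) t x (snd p)) \<le> D * (1 + norm x)"
    proof
      fix p :: "'k \<times> 'n"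
      obtain D where "D \<ge> 0" "\<forall>t x. 0 \<le> t \<longrightarrow> t \<le> T' \<longrightarrow> norm (dA (fst p) t x (snd p)) \<le> D * (1 + norm x)"
        using holder_growth[OF hdA[of "fst p" "snd p"] dl T0] by (elim exE conjE)
      then show "\<exists>D\<ge>0. \<forall>t x. (0 \<le> t \<and> t \<le> T') \<longrightarrow> norm (dA (fst p) t x (snd p)) \<le> D * (1 + norm x)" by blast
    qed
    obtain D1 where D1: "D1 \<ge> 0" "\<forall>i t x. (0 \<le> t \<and> t \<le> T') \<longrightarrow> norm (A i t x) \<le> D1 * (1 + norm x)"
      using finite_growth[where P="\<lambda>t. 0 \<le> t \<and> t \<le> T'" and f=A, OF gA] by (elim exE conjE)
    obtain D3 where D3: "D3 \<ge> 0" "\<forall>i t x. (0 \<le> t \<and> t \<le> T') \<longrightarrow> norm (q i t x) \<le> D3 * (1 + norm x)"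
      using finite_growth[where P="\<lambda>t. 0 \<le> t \<and> t \<le> T'" and f=q, OF gq] by (elim exE conjE)
    obtain D2 where D2: "D2 \<ge> 0" "\<forall>p t x. (0 \<le> t \<and> t \<le> T') \<longrightarrow> norm (dA (fst p) t x (snd p)) \<le> D2 * (1 + norm x)"
      using finite_growth[where P="\<lambda>t. 0 \<le> t \<and> t \<le> T'" and f="\<lambda>p t x. dA (fst p) t x (snd p)", OF gdA] by (elim exE conjE)
    show ?thesis
    proof (intro exI[of _ "D1 + D2 + D3"] conjI allI impI)
      show "0 \<le> D1 + D2 + D3" using D1 D2 D3 by simp
      fix i t \<alpha> and x :: "real^'n" assume t: "0 \<le> t" "t \<le> T'"
      have n0: "0 \<le> 1 + norm x" by simp
      have "D1 * (1 + norm x) \<le> (D1 + D2 + D3) * (1 + norm x)" using D2 D3 n0 by (intro mult_right_mono) auto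
      moreover have "norm (A i t x) \<le> D1 * (1 + norm x)" using D1(2) t by blast
      ultimately show "norm (A i t x) \<le> (D1 + D2 + D3) * (1 + norm x)" by linarith
      have "D2 * (1 + norm x) \<le> (D1 + D2 + D3) * (1 + norm x)" using D1 D3 n0 by (intro mult_right_mono) auto
      moreover have "norm (dA (fst (i,\<alpha>)) t x (snd (i,\<alpha>))) \<le> D2 * (1 + norm x)" using D2(2) t by blast
      then have "norm (dA i t x \<alpha>) \<le> D2 * (1 + norm x)" by simp
      ultimately show "norm (dA i t x \<alpha>) \<le> (D1 + D2 + D3) * (1 + norm x)" by linarith
      have "D3 * (1 + norm x) \<le> (D1 + D2 + D3) * (1 + norm x)" using D1 D2 n0 by (intro mult_right_mono) auto
      moreover have "norm (q i t x) \<le> D3 * (1 + norm x)" using D3(2) t by blast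
      ultimately show "norm (q i t x) \<le> (D1 + D2 + D3) * (1 + norm x)" by linarith
    qed
  qed
  define NN where "NN = real CARD('k)"
  define \<kappa> where "\<kappa> = NN * Lb / c0"
  have ka0: "0 \<le> \<kappa>" using Lb0 c0pos by (simp add: \<kappa>_def NN_def)
  have kac: "c0 * \<kappa> = NN * Lb" using c0pos by (simp add: \<kappa>_def)
  show ?thesis
  proof (intro exI[of _ "\<kappa> + 1"] conjI allI impI)
    show "0 < \<kappa> + 1" using ka0 by simp
    fix u0 :: "real^'n \<Rightarrow> real^'k" and u :: "real \<Rightarrow> real^'n \<Rightarrow> real^'k"
    assume H: "bounded (range u0) \<and> continuous_on UNIV u0 \<and> (\<forall>y j. u0 y $ j \<ge> 0) \<and> kpp_solution A q Lc Cc u0 u"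
    then have u0b: "bounded (range u0)" and u0nn: "\<And>y j. u0 y $ j \<ge> 0" and kpp: "kpp_solution A q Lc Cc u0 u" by auto
    note K = kpp[unfolded kpp_solution_def]
    have ucont: "continuous_on ({0..} \<times> UNIV) (\<lambda>p. u (fst p) (snd p))"
      using K[THEN conjunct1] by (simp add: case_prod_unfold)
    have ucj: "continuous_on ({0..T'} \<times> UNIV) (\<lambda>p. u (fst p) (snd p) $ j)" for T' j
      by (rule continuous_on_component, rule continuous_on_subset[OF ucont]) auto
    have uinit: "\<And>x. u 0 x = u0 x" using K[THEN conjunct2, THEN conjunct1] by blast
    have ubnd: "\<exists>Bu. \<forall>t x j. 0 \<le> t \<longrightarrow> t \<le> T' \<longrightarrow> \<bar>u t x $ j\<bar> \<le> Bu" if "T' > 0" for T'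
    proof -
      have "bounded ((\<lambda>(t, x). u t x) ` ({0..T'} \<times> UNIV))" using K[THEN conjunct2, THEN conjunct2, THEN conjunct1] that by blast
      then obtain Bu where Bu: "\<forall>z\<in>(\<lambda>(t, x). u t x) ` ({0..T'} \<times> UNIV). norm z \<le> Bu" unfolding bounded_iff by blast
      show ?thesis
      proof (intro exI allI impI)
        fix t x j assume "0 \<le> t" "t \<le> T'"
        then have "norm (u t x) \<le> Bu" using Bu by force
        then show "\<bar>u t x $ j\<bar> \<le> Bu" using component_le_norm_cart order_trans by blast
      qed
    qed
    define Pr where "Pr i (ut :: real \<Rightarrow> real^'n \<Rightarrow> real) (Du :: real \<Rightarrow> real^'n \<Rightarrow> real^'n)
            (D2u :: real \<Rightarrow> real^'n \<Rightarrow> real^'n^'n) (DF :: real \<Rightarrow> real^'n \<Rightarrow> real^'n \<Rightarrow> real^'n) \<longleftrightarrow>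
        (\<forall>t>0. \<forall>x. ((\<lambda>s. u s x $ i) has_real_derivative ut t x) (at t)) \<and>
        (\<forall>t>0. \<forall>x. ((\<lambda>y. u t y $ i) has_derivative (\<lambda>h. Du t x \<bullet> h)) (at x)) \<and>
        (\<forall>t>0. \<forall>x. (Du t has_derivative (\<lambda>h. D2u t x *v h)) (at x)) \<and>
        (\<forall>t>0. \<forall>x. ((\<lambda>y. A i t y *v Du t y) has_derivative DF t x) (at x)) \<and>
        (\<forall>t>0. \<forall>x.
           ut t x - (\<Sum>\<alpha>\<in>UNIV. DF t x (axis \<alpha> 1) $ \<alpha>) + q i t x \<bullet> Du t x
           = (\<Sum>j\<in>UNIV. Lc t x $ i $ j * u t x $ j) - u t x $ i * (\<Sum>j\<in>UNIV. Cc t x $ i $ j * u t x $ j))" for i ut Du D2u DF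
    have K4: "\<forall>i. \<exists>ut Du D2u DF. Pr i ut Du D2u DF"
    proof
      fix i
      from K[THEN conjunct2, THEN conjunct2, THEN conjunct2, rule_format, of i]
      obtain ut Du D2u DF where
        "(\<forall>t>0. \<forall>x. ((\<lambda>s. u s x $ i) has_real_derivative ut t x) (at t))"
        "(\<forall>t>0. \<forall>x. ((\<lambda>y. u t y $ i) has_derivative (\<lambda>h. Du t x \<bullet> h)) (at x))"
        "(\<forall>t>0. \<forall>x. (Du t has_derivative (\<lambda>h. D2u t x *v h)) (at x))"
        "(\<forall>t>0. \<forall>x. ((\<lambda>y. A i t y *v Du t y) has_derivative DF t x) (at x))"
        "(\<forall>t>0. \<forall>x.
           ut t x - (\<Sum>\<alpha>\<in>UNIV. DF t x (axis \<alpha> 1) $ \<alpha>) + q i t x \<bullet> Du t x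
           = (\<Sum>j\<in>UNIV. Lc t x $ i $ j * u t x $ j) - u t x $ i * (\<Sum>j\<in>UNIV. Cc t x $ i $ j * u t x $ j))"
        by (elim exE conjE) 
      then show "\<exists>ut Du D2u DF. Pr i ut Du D2u DF" unfolding Pr_def by blast
    qed
    obtain ut Du D2u DF where PrA: "\<And>i. Pr i (ut i) (Du i) (D2u i) (DF i)"
      using K4 by metis
    have dt: "\<And>i t x. t > 0 \<Longrightarrow> ((\<lambda>s. u s x $ i) has_real_derivative ut i t x) (at t)"
      using PrA unfolding Pr_def by blast
    have dx: "\<And>i t x. t > 0 \<Longrightarrow> ((\<lambda>y. u t y $ i) has_derivative (\<lambda>h. Du i t x \<bullet> h)) (at x)"
      using PrA unfolding Pr_def by blast
    have dxx: "\<And>i t x. t > 0 \<Longrightarrow> (Du i t has_derivative (\<lambda>h. D2u i t x *v h)) (at x)"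
      using PrA unfolding Pr_def by blast
    have dF: "\<And>i t x. t > 0 \<Longrightarrow> ((\<lambda>y. A i t y *v Du i t y) has_derivative DF i t x) (at x)"
      using PrA unfolding Pr_def by blast
    have pde: "\<And>i t x. t > 0 \<Longrightarrow> ut i t x - (\<Sum>\<alpha>\<in>UNIV. DF i t x (axis \<alpha> 1) $ \<alpha>) + q i t x \<bullet> Du i t x
           = (\<Sum>j\<in>UNIV. Lc t x $ i $ j * u t x $ j) - u t x $ i * (\<Sum>j\<in>UNIV. Cc t x $ i $ j * u t x $ j)"
      using PrA unfolding Pr_def by blast
    have unn: "0 \<le> u t x $ i" if "0 \<le> t" for t x i
    proof -
      define T' where "T' = t + 1"
      have Tp: "0 < T'" using that by (simp add: T'_def)
      obtain D where D0: "0 \<le> D" and Dg: "\<forall>i t x \<alpha>. 0 \<le> t \<longrightarrow> t \<le> T' \<longrightarrow>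
          norm (A i t x) \<le> D * (1 + norm x) \<and> norm (dA i t x \<alpha>) \<le> D * (1 + norm x) \<and> norm (q i t x) \<le> D * (1 + norm x)"
        using growth[of T'] Tp by auto
      obtain Bu where Bu: "\<And>t x j. 0 \<le> t \<Longrightarrow> t \<le> T' \<Longrightarrow> \<bar>u t x $ j\<bar> \<le> Bu" using ubnd[OF Tp] by blast
      define \<beta> where "\<beta> = NN * Lb + NN * Cb * Bu"
      have m_cont: "\<And>i. continuous_on ({0..T'} \<times> UNIV) (\<lambda>p. (- u (fst p) (snd p)) $ i)"
        using ucj by (simp add: continuous_on_minus)
      have m_bnd: "\<And>i t x. 0 \<le> t \<Longrightarrow> t \<le> T' \<Longrightarrow> (- u t x) $ i \<le> Bu"
        using Bu by (simp add: abs_le_iff)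
      have m_init: "\<And>i x. (- u 0 x) $ i \<le> 0" using uinit u0nn by simp
      have m_dt: "\<And>i t x. 0 < t \<Longrightarrow> t \<le> T' \<Longrightarrow> ((\<lambda>s. (- u s x) $ i) has_real_derivative - ut i t x) (at t)"
        using dt by (auto intro!: derivative_eq_intros)
      have m_dx: "\<And>i t x. 0 < t \<Longrightarrow> t \<le> T' \<Longrightarrow> ((\<lambda>y. (- u t y) $ i) has_derivative (\<lambda>h. - Du i t x \<bullet> h)) (at x)"
        using dx by (auto intro!: derivative_eq_intros)
      have m_dxx: "\<And>i t x. 0 < t \<Longrightarrow> t \<le> T' \<Longrightarrow> ((\<lambda>y. - Du i t y) has_derivative (\<lambda>h. - D2u i t x *v h)) (at x)"
      proof -
        fix i t x assume "0 < t" "t \<le> T'"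
        have "(\<lambda>h. - D2u i t x *v h) = (\<lambda>h. - (D2u i t x *v h))"
          by (auto simp: fun_eq_iff vec_eq_iff matrix_vector_mult_def sum_negf)
        then show "((\<lambda>y. - Du i t y) has_derivative (\<lambda>h. - D2u i t x *v h)) (at x)"
          using dxx[OF \<open>0 < t\<close>] by (auto intro!: derivative_eq_intros)
      qed
      have m_dF: "\<And>i t x. 0 < t \<Longrightarrow> t \<le> T' \<Longrightarrow> ((\<lambda>y. A i t y *v - Du i t y) has_derivative (\<lambda>h. - DF i t x h)) (at x)"
      proof -
        fix i t x assume "0 < t" "t \<le> T'"
        have "(\<lambda>y. A i t y *v - Du i t y) = (\<lambda>y. - (A i t y *v Du i t y))"
          by (auto simp: fun_eq_iff vec_eq_iff matrix_vector_mult_def sum_negf)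
        then show "((\<lambda>y. A i t y *v - Du i t y) has_derivative (\<lambda>h. - DF i t x h)) (at x)"
          using dF[OF \<open>0 < t\<close>] by (auto intro!: derivative_eq_intros)
      qed
      have m_H: "\<And>i t x. 0 < t \<Longrightarrow> t \<le> T' \<Longrightarrow> (- u t x) $ i > 0 \<Longrightarrow> (\<forall>j. (- u t x) $ j \<le> (- u t x) $ i) \<Longrightarrow>
          - ut i t x - (\<Sum>\<alpha>\<in>UNIV. (- DF i t x (axis \<alpha> 1)) $ \<alpha>) + q i t x \<bullet> - Du i t x \<le> \<beta> * (- u t x) $ i"
      proof -
        fix i t x assume t: "0 < t" "t \<le> T'" and neg: "(- u t x) $ i > 0" and mx: "\<forall>j. (- u t x) $ j \<le> (- u t x) $ i"
        have "\<beta> * u t x $ i \<le> (\<Sum>j\<in>UNIV. Lc t x $ i $ j * u t x $ j) - u t x $ i * (\<Sum>j\<in>UNIV. Cc t x $ i $ j * u t x $ j)"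
          unfolding \<beta>_def NN_def
        proof (rule lower_rhs)
          show "\<forall>j. j \<noteq> i \<longrightarrow> 0 \<le> Lc t x $ i $ j" using offd by metis
          show "\<forall>j. 0 \<le> Cc t x $ i $ j" using cnn by blast
          show "\<forall>j. u t x $ i \<le> u t x $ j" using mx by simp
          show "u t x $ i < 0" using neg by simp
          show "\<forall>j. Lc t x $ i $ j \<le> Lb" using lb abs_le_D1 by blast
          show "\<forall>j. Cc t x $ i $ j \<le> Cb" using cb abs_le_D1 by blast
          show "- u t x $ i \<le> Bu" using Bu[of t x i] t by (simp add: abs_le_iff)
        qed
        then show "- ut i t x - (\<Sum>\<alpha>\<in>UNIV. (- DF i t x (axis \<alpha> 1)) $ \<alpha>) + q i t x \<bullet> - Du i t x \<le> \<beta> * (- u t x) $ i"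
          using pde[OF t(1), of i x] by (simp add: sum_negf)
      qed
      have "(- u t x) $ i \<le> 0"
        by (rule max_principle[where v="\<lambda>t x. - u t x" and vt="\<lambda>i t x. - ut i t x" and Dv="\<lambda>i t x. - Du i t x"
              and D2v="\<lambda>i t x. - D2u i t x" and DF="\<lambda>i t x h. - DF i t x h" and A=A and dA=dA and q=q
              and \<beta>=\<beta> and B=Bu and D=D and T'=T',
              OF Tp D0 m_cont m_bnd m_init m_dt m_dx m_dxx m_dF dA symA psdA _ _ _ m_H])
           (use Dg that in \<open>auto simp: T'_def\<close>)
      then show ?thesis by simp
    qed
    define m0 where "m0 = (SUP y. Max (range (\<lambda>j. u0 y $ j)))"
    obtain Bu0 where Bu0: "\<And>y. norm (u0 y) \<le> Bu0" using u0b unfolding bounded_iff by blast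
    have bddm: "bdd_above (range (\<lambda>y. Max (range (\<lambda>j. u0 y $ j))))"
    proof (rule bdd_aboveI)
      fix z assume "z \<in> range (\<lambda>y. Max (range (\<lambda>j. u0 y $ j)))"
      then obtain y where "z = Max (range (\<lambda>j. u0 y $ j))" by blast
      moreover have "u0 y $ j \<le> Bu0" for j using Bu0[of y] component_le_norm_cart[of "u0 y" j] by simp
      ultimately show "z \<le> Bu0" by simp
    qed
    have u0m: "u0 y $ j \<le> m0" for y j
    proof -
      have "u0 y $ j \<le> Max (range (\<lambda>j. u0 y $ j))" by (rule Max_ge) auto
      also have "\<dots> \<le> m0" unfolding m0_def by (rule cSUP_upper[OF _ bddm]) simp
      finally show ?thesis .
    qed
    have m00: "0 \<le> m0" using u0m[of 0 undefined] u0nn[of 0 undefined] by simp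
    define a where "a = max (m0 - \<kappa>) 0"
    have a0: "0 \<le> a" and am: "a \<le> m0" and ak: "m0 \<le> \<kappa> + a" using m00 ka0 by (auto simp: a_def)
    define w where "w s = \<kappa> + a / (1 + c0 * a * s)" for s
    define w' where "w' s = - c0 * (a / (1 + c0 * a * s))^2" for s
    have den: "1 + c0 * a * s > 0" if "0 \<le> s" for s
      using that a0 c0pos by (simp add: add_pos_nonneg)
    have uw: "u t x $ i \<le> w t" if "0 \<le> t" for t x i
    proof -
      define T' where "T' = t + 1"
      have Tp: "0 < T'" using that by (simp add: T'_def)
      obtain D where D0: "0 \<le> D" and Dg: "\<forall>i t x \<alpha>. 0 \<le> t \<longrightarrow> t \<le> T' \<longrightarrow>
          norm (A i t x) \<le> D * (1 + norm x) \<and> norm (dA i t x \<alpha>) \<le> D * (1 + norm x) \<and> norm (q i t x) \<le> D * (1 + norm x)"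
        using growth[of T'] Tp by auto
      obtain Bu where Bu: "\<And>t x j. 0 \<le> t \<Longrightarrow> t \<le> T' \<Longrightarrow> \<bar>u t x $ j\<bar> \<le> Bu" using ubnd[OF Tp] by blast
      have wpos: "0 \<le> w s" if "0 \<le> s" for s using den[OF that] a0 ka0 by (simp add: w_def)
      have w_cont: "continuous_on ({0..T'} \<times> UNIV) (\<lambda>p. w (fst p))"
        unfolding w_def using den by (intro continuous_intros) (auto simp: less_imp_neq[symmetric])
      have w_cont': "continuous_on ({0..T'} \<times> UNIV) (\<lambda>p. w (fst p))"
        using w_cont .
      have m_cont: "\<And>i. continuous_on ({0..T'} \<times> UNIV) (\<lambda>p. (\<chi> j. u (fst p) (snd p) $ j - w (fst p)) $ i)"
        by (simp, rule continuous_on_diff[OF ucj w_cont])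
      have m_bnd: "\<And>i t x. 0 \<le> t \<Longrightarrow> t \<le> T' \<Longrightarrow> (\<chi> j. u t x $ j - w t) $ i \<le> Bu"
      proof -
        fix i t x assume "0 \<le> t" "t \<le> T'"
        then show "(\<chi> j. u t x $ j - w t) $ i \<le> Bu" using Bu[of t x i] wpos[of t] by (simp add: abs_le_iff)
      qed
      have m_init: "\<And>i x. (\<chi> j. u 0 x $ j - w 0) $ i \<le> 0"
      proof -
        fix i x
        have "u0 x $ i \<le> \<kappa> + a" using u0m[of x i] ak by linarith
        then show "(\<chi> j. u 0 x $ j - w 0) $ i \<le> 0" using uinit[of x] by (simp add: w_def)
      qed
      have dw: "(w has_real_derivative w' s) (at s)" if "0 < s" for s
      proof -
        have d: "1 + c0 * a * s \<noteq> 0" using den[of s] that by simp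
        show ?thesis unfolding w_def w'_def using d
          by (auto intro!: derivative_eq_intros simp: power2_eq_square field_simps)
      qed
      have m_dt: "\<And>i t x. 0 < t \<Longrightarrow> t \<le> T' \<Longrightarrow> ((\<lambda>s. (\<chi> j. u s x $ j - w s) $ i) has_real_derivative ut i t x - w' t) (at t)"
        using dt dw by (auto intro!: derivative_eq_intros)
      have m_dx: "\<And>i t x. 0 < t \<Longrightarrow> t \<le> T' \<Longrightarrow> ((\<lambda>y. (\<chi> j. u t y $ j - w t) $ i) has_derivative (\<lambda>h. Du i t x \<bullet> h)) (at x)"
      proof -
        fix i t x assume tt: "0 < t" "t \<le> T'"
        have "((\<lambda>y. u t y $ i - w t) has_derivative (\<lambda>h. Du i t x \<bullet> h - 0)) (at x)"
          by (rule has_derivative_diff[OF dx[OF tt(1)] has_derivative_const])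
        then show "((\<lambda>y. (\<chi> j. u t y $ j - w t) $ i) has_derivative (\<lambda>h. Du i t x \<bullet> h)) (at x)" by simp
      qed
      have m_dxx: "\<And>i t x. 0 < t \<Longrightarrow> t \<le> T' \<Longrightarrow> (Du i t has_derivative (\<lambda>h. D2u i t x *v h)) (at x)"
        using dxx by simp
      have m_dF: "\<And>i t x. 0 < t \<Longrightarrow> t \<le> T' \<Longrightarrow> ((\<lambda>y. A i t y *v Du i t y) has_derivative DF i t x) (at x)"
        using dF by simp
      have m_H: "\<And>i t x. 0 < t \<Longrightarrow> t \<le> T' \<Longrightarrow> (\<chi> j. u t x $ j - w t) $ i > 0 \<Longrightarrow>
          (\<forall>j. (\<chi> j. u t x $ j - w t) $ j \<le> (\<chi> j. u t x $ j - w t) $ i) \<Longrightarrow>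
          (ut i t x - w' t) - (\<Sum>\<alpha>\<in>UNIV. DF i t x (axis \<alpha> 1) $ \<alpha>) + q i t x \<bullet> Du i t x \<le> (NN * Lb) * (\<chi> j. u t x $ j - w t) $ i"
      proof -
        fix i t x assume t: "0 < t" "t \<le> T'" and pos: "(\<chi> j. u t x $ j - w t) $ i > 0"
          and mx: "\<forall>j. (\<chi> j. u t x $ j - w t) $ j \<le> (\<chi> j. u t x $ j - w t) $ i"
        have ui: "w t < u t x $ i" using pos by simp
        have mx': "\<forall>j. u t x $ j \<le> u t x $ i" using mx by simp
        have R: "(\<Sum>j\<in>UNIV. Lc t x $ i $ j * u t x $ j) - u t x $ i * (\<Sum>j\<in>UNIV. Cc t x $ i $ j * u t x $ j)
            \<le> NN * Lb * u t x $ i - c0 * (u t x $ i)^2"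
          unfolding NN_def
        proof (rule upper_rhs)
          show "\<forall>j. j \<noteq> i \<longrightarrow> 0 \<le> Lc t x $ i $ j" using offd by metis
          show "\<forall>j. 0 \<le> Cc t x $ i $ j" using cnn by blast
          show "\<forall>j. 0 \<le> u t x $ j" using unn t by auto
          show "\<forall>j. u t x $ j \<le> u t x $ i" by (rule mx')
          show "\<forall>j. Lc t x $ i $ j \<le> Lb" using lb abs_le_D1 by blast
          show "c0 \<le> Cc t x $ i $ i" by (rule c0le)
        qed
        define y where "y = a / (1 + c0 * a * t)"
        have y0: "0 \<le> y" unfolding y_def using den[of t] t a0 by simp
        have wy: "w t = \<kappa> + y" by (simp add: w_def y_def)
        have w'y: "w' t = - c0 * y^2" by (simp add: w'_def y_def)
        have oi: "c0 * \<kappa> * u t x $ i - c0 * (u t x $ i)^2 + c0 * y^2 \<le> c0 * \<kappa> * (u t x $ i - w t)"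
          by (rule ode_ineq[OF c0pos ka0 y0 wy]) (use ui in simp)
        show "(ut i t x - w' t) - (\<Sum>\<alpha>\<in>UNIV. DF i t x (axis \<alpha> 1) $ \<alpha>) + q i t x \<bullet> Du i t x \<le> (NN * Lb) * (\<chi> j. u t x $ j - w t) $ i"
        proof -
          have k1: "NN * Lb * u t x $ i = c0 * \<kappa> * u t x $ i" using kac by simp
          have k2: "NN * Lb * (u t x $ i - w t) = c0 * \<kappa> * (u t x $ i - w t)" using kac by simp
          have w2: "w' t = - (c0 * y^2)" using w'y by simp
          show ?thesis unfolding vec_lambda_beta using pde[OF t(1), of i x] R oi w2 k1 k2 by linarith
        qed
      qed
      have "(\<chi> j. u t x $ j - w t) $ i \<le> 0"
        by (rule max_principle[where v="\<lambda>t x. \<chi> j. u t x $ j - w t" and vt="\<lambda>i t x. ut i t x - w' t" and Dv=Du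
              and D2v=D2u and DF=DF and A=A and dA=dA and q=q
              and \<beta>="NN * Lb" and B=Bu and D=D and T'=T',
              OF Tp D0 m_cont m_bnd m_init m_dt m_dx m_dxx m_dF dA symA psdA _ _ _ m_H])
           (use Dg that in \<open>auto simp: T'_def\<close>)
      then show ?thesis by simp
    qed
    have wle: "w s \<le> \<kappa> + a" if "0 \<le> s" for s
    proof -
      have "0 \<le> c0 * a * s" using a0 c0pos that by simp
      then have "a * 1 \<le> a * (1 + c0 * a * s)" using a0 by (intro mult_left_mono) auto
      then have "a / (1 + c0 * a * s) \<le> a"
        using den[OF that] by (simp add: divide_le_eq)
      then show ?thesis by (simp add: w_def)
    qed
    show "\<And>i t x. t \<ge> 0 \<Longrightarrow> u t x $ i \<le> \<kappa> + 1 + (SUP y. Max (range (\<lambda>j. u0 y $ j)))"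
    proof -
      fix i and t :: real and x :: "real^'n" assume t0: "0 \<le> t"
      have "u t x $ i \<le> \<kappa> + a" using uw[OF t0, of x i] wle[OF t0] by linarith
      then show "u t x $ i \<le> \<kappa> + 1 + (SUP y. Max (range (\<lambda>j. u0 y $ j)))"
        using am unfolding m0_def by simp
    qed
    show "Limsup at_top (\<lambda>t. ereal (SUP x. Max (range (\<lambda>i. u t x $ i)))) \<le> ereal (\<kappa> + 1)"
    proof (rule Limsup_bounded)
      show "\<forall>\<^sub>F t in at_top. ereal (SUP x. Max (range (\<lambda>i. u t x $ i))) \<le> ereal (\<kappa> + 1)"
        unfolding eventually_at_top_linorder
      proof (intro exI allI impI)
        fix t :: real assume t: "t \<ge> 1 / c0"
        have "0 < 1 / c0" using c0pos by simp
        then have t0: "0 \<le> t" using t by linarith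
        have "c0 * t \<ge> 1" using t c0pos by (simp add: divide_le_eq mult.commute)
        then have "a * 1 \<le> a * (c0 * t)" using a0 by (intro mult_left_mono) auto
        moreover have "a * (c0 * t) = c0 * a * t" by simp
        ultimately have "a \<le> 1 + c0 * a * t" by linarith
        then have "a / (1 + c0 * a * t) \<le> 1" using den[OF t0] by (simp add: divide_le_eq)
        then have wk: "w t \<le> \<kappa> + 1" by (simp add: w_def)
        have "(SUP x. Max (range (\<lambda>i. u t x $ i))) \<le> \<kappa> + 1"
        proof (rule cSUP_least)
          fix x
          show "Max (range (\<lambda>i. u t x $ i)) \<le> \<kappa> + 1"
          proof -
            have "\<forall>i. u t x $ i \<le> \<kappa> + 1"
            proof
              fix i show "u t x $ i \<le> \<kappa> + 1" using uw[OF t0, of x i] wk by linarith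
            qed
            then show ?thesis by simp
          qed
        qed simp
        then show "ereal (SUP x. Max (range (\<lambda>i. u t x $ i))) \<le> ereal (\<kappa> + 1)" by simp
      qed
    qed
  qed
qed


end
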